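(* Let $\mathbb K$ be a field, $d\ge1$, and let $(a_n)_{n\ge0}$ be a sequence in $\mathbb K$ satisfying $a_n=\sum_{i=1}^d\gamma_ia_{n-i}$ for all $n\ge d$, where $\gamma_1,\dots,\gamma_d\in\mathbb K$, $\gamma_d\ne0$, and $(a_0,\dots,a_{d-1})\ne0$. Then there exists a graded $\mathbb K$-algebra $A$ with $d+3$ generators of degree $1$ and $d^2+4d+5$ homogeneous quadratic relations such that for all $n\ge0$ $$h_A(n+3)=\begin{cases}2d+5,& a_n=0,\\ 2d+4,& a_n\ne0.\end{cases}$$
   Context: $h_A(n)=\dim A_n$ for a graded algebra $A=\bigoplus_{n\ge0}A_n$ with $A_0=\mathbb K$. *)

theory Defs
  imports Complex_Main "HOL-Library.Function_Algebras"
begin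

text \<open>Free associative (noncommutative) algebra on generators x_0,...,x_(g-1) over a field 'k.
  Its degree-n component is identified with the 'k-valued functions on words of length n
  over the alphabet {0..<g} (the coefficient of each monomial).\<close>

definition words :: "nat \<Rightarrow> nat \<Rightarrow> nat list set" where
  "words g n = {w. length w = n \<and> set w \<subseteq> {0..<g}}"

definition fscale :: "'k::field \<Rightarrow> (nat list \<Rightarrow> 'k) \<Rightarrow> (nat list \<Rightarrow> 'k)" where
  "fscale c f = (\<lambda>w. c * f w)"

text \<open>A homogeneous quadratic relation r = sum_{i,j<g} r i j x_i x_j is given by its
  coefficient function. The element u * r * v of the free algebra (u, v words):\<close>
definition sandwich :: "nat \<Rightarrow> nat list \<Rightarrow> (nat \<Rightarrow> nat \<Rightarrow> 'k::field) \<Rightarrow> nat list \<Rightarrow> (nat list \<Rightarrow> 'k)" where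
  "sandwich g u r v = (\<lambda>w. \<Sum>i<g. \<Sum>j<g. if w = u @ [i, j] @ v then r i j else 0)"

definition ideal_deg :: "nat \<Rightarrow> (nat \<Rightarrow> nat \<Rightarrow> 'k::field) list \<Rightarrow> nat \<Rightarrow> (nat list \<Rightarrow> 'k) set" where
  "ideal_deg g rels n = module.span fscale
     {sandwich g u r v | u r v. r \<in> set rels \<and> u \<in> words g (length u) \<and>
        v \<in> words g (length v) \<and> length u + length v + 2 = n}"

text \<open>Hilbert function h_A(n) = dim A_n of A = K<x_0..x_(g-1)> / (rels):
  dim of the free degree-n component minus dim of the degree-n part of the ideal.\<close>
definition hilb :: "nat \<Rightarrow> (nat \<Rightarrow> nat \<Rightarrow> 'k::field) list \<Rightarrow> nat \<Rightarrow> nat" where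
  "hilb g rels n = card (words g n) - vector_space.dim fscale (ideal_deg g rels n)"

end

theory Submission
  imports Defs
begin



lemma sum_app: "(sum f A) z = (\<Sum>x\<in>A. f x z)"
  by (induct A rule: infinite_finite_induct) auto

interpretation VS: vector_space "fscale :: 'k::field \<Rightarrow> (nat list \<Rightarrow> 'k) \<Rightarrow> (nat list \<Rightarrow> 'k)"
  by unfold_locales (auto simp: fscale_def algebra_simps fun_eq_iff)

definition ind :: "nat list \<Rightarrow> nat list \<Rightarrow> 'k::field" where
  "ind w = (\<lambda>z. if z = w then 1 else 0)"

definition Fn :: "(nat list \<Rightarrow> 'k::field) \<Rightarrow> nat list set \<Rightarrow> (nat list \<Rightarrow> 'k) \<Rightarrow> 'k" where
  "Fn \<phi> W f = (\<Sum>z\<in>W. f z * \<phi> z)"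

lemma Fn_zero_span:
  assumes "\<forall>g\<in>G. Fn \<phi> W g = 0" and "f \<in> VS.span G"
  shows "Fn \<phi> W f = 0"
proof -
  have "VS.subspace {f. Fn \<phi> W f = 0}"
    unfolding VS.subspace_def
    by (auto simp: Fn_def fscale_def sum.distrib distrib_right mult.assoc sum_distrib_left[symmetric])
  then have "VS.span G \<subseteq> {f. Fn \<phi> W f = 0}"
    using assms(1) by (intro VS.span_minimal) auto
  then show ?thesis using assms(2) by auto
qed

lemma Fn_ind: "finite W \<Longrightarrow> \<mu> \<in> W \<Longrightarrow> Fn \<phi> W (ind \<mu>) = \<phi> \<mu>"
proof -
  assume a: "finite W" "\<mu> \<in> W"
  have "(\<Sum>z\<in>W. ind \<mu> z * \<phi> z) = (\<Sum>z\<in>W. if z = \<mu> then \<phi> z else 0)" by (intro sum.cong) (auto simp: ind_def)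
  then show ?thesis using a by (simp add: Fn_def)
qed

lemma Fn_lin_sum: "finite A \<Longrightarrow> Fn \<phi> W (\<Sum>x\<in>A. fscale (c x) (h x)) = (\<Sum>x\<in>A. c x * Fn \<phi> W (h x))"
  by (simp add: Fn_def sum_app fscale_def sum_distrib_left sum_distrib_right mult.assoc sum.swap[of _ A])

lemma dim_lemma:
  fixes G :: "(nat list \<Rightarrow> 'k::field) set" and W R :: "nat list set"
  assumes finW: "finite W" and RW: "R \<subseteq> W"
    and GE: "G \<subseteq> VS.span (ind ` W)"
    and sp: "\<forall>w\<in>W. ind w \<in> VS.span (G \<union> ind ` R)"
    and fu: "\<forall>\<nu>\<in>R. \<exists>\<phi>. (\<forall>g\<in>G. Fn \<phi> W g = 0) \<and> \<phi> \<nu> \<noteq> 0 \<and> (\<forall>\<mu>\<in>R. \<mu> \<noteq> \<nu> \<longrightarrow> \<phi> \<mu> = 0)"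
  shows "VS.dim (VS.span G) + card R = card W"
proof -
  obtain B where B: "B \<subseteq> VS.span G" "VS.independent B" "VS.span G \<subseteq> VS.span B" "card B = VS.dim (VS.span G)"
    using VS.basis_exists[of "VS.span G"] by blast
  have finR: "finite R" using finW RW finite_subset by blast
  have injind: "inj (ind :: nat list \<Rightarrow> nat list \<Rightarrow> 'k)"
    unfolding inj_def ind_def fun_eq_iff by (metis zero_neq_one)
  have injW: "inj_on (ind :: nat list \<Rightarrow> nat list \<Rightarrow> 'k) W" using injind by (rule inj_on_subset) simp
  have spG: "VS.span G \<subseteq> VS.span (ind ` W)"
    using GE by (metis VS.span_mono VS.span_span)
  have finB: "finite B"
    using VS.independent_span_bound[of "ind ` W" B] B(1,2) spG finW by auto
  have spB: "VS.span B = VS.span G"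
    using B(1,3) by (metis VS.span_mono VS.span_span subset_antisym)
  have inB0: "Fn \<phi> W f = 0" if "\<forall>g\<in>G. Fn \<phi> W g = 0" "f \<in> VS.span B" for \<phi> f
    using Fn_zero_span[OF that(1)] that(2) spB by auto
  have disj: "B \<inter> ind ` R = {}"
  proof (rule ccontr)
    assume "B \<inter> ind ` R \<noteq> {}"
    then obtain \<nu> where \<nu>: "\<nu> \<in> R" "ind \<nu> \<in> B" by auto
    obtain \<phi> where \<phi>: "\<forall>g\<in>G. Fn \<phi> W g = 0" "\<phi> \<nu> \<noteq> 0" using bspec[OF fu \<nu>(1)] by auto
    have "Fn \<phi> W (ind \<nu>) = 0" using inB0[OF \<phi>(1)] \<nu>(2) VS.span_base by blast
    moreover have "Fn \<phi> W (ind \<nu>) = \<phi> \<nu>" using Fn_ind finW RW \<nu>(1) by blast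
    ultimately show False using \<phi>(2) by simp
  qed
  have indep: "VS.independent (B \<union> ind ` R)"
  proof (rule VS.independent_if_scalars_zero)
    show "finite (B \<union> ind ` R)" using finB finR by auto
    fix f x assume sum0: "(\<Sum>x\<in>B \<union> ind ` R. fscale (f x) x) = 0" and x: "x \<in> B \<union> ind ` R"
    define s where "s = (\<Sum>x\<in>ind ` R. fscale (f x) x)"
    have "(\<Sum>x\<in>B. fscale (f x) x) + s = 0"
      using sum0 unfolding s_def by (subst (asm) sum.union_disjoint) (use finB finR disj in auto)
    then have s_eq: "s = - (\<Sum>x\<in>B. fscale (f x) x)" by (simp add: eq_neg_iff_add_eq_0 add.commute)
    have "(\<Sum>x\<in>B. fscale (f x) x) \<in> VS.span B"
      by (rule VS.span_sum) (simp add: VS.span_scale VS.span_base)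
    then have sB: "s \<in> VS.span B"
      unfolding s_eq by (rule VS.span_neg)
    have fR: "f (ind \<nu>) = 0" if nuR: "\<nu> \<in> R" for \<nu>
    proof -
      obtain \<phi> where \<phi>: "\<forall>g\<in>G. Fn \<phi> W g = 0" "\<phi> \<nu> \<noteq> 0" "\<forall>\<mu>\<in>R. \<mu> \<noteq> \<nu> \<longrightarrow> \<phi> \<mu> = 0"
        using bspec[OF fu nuR] by auto
      have "s = (\<Sum>\<mu>\<in>R. fscale (f (ind \<mu>)) (ind \<mu>))"
        unfolding s_def using sum.reindex[OF inj_on_subset[OF injind, of R]] by (simp add: o_def)
      then have "Fn \<phi> W s = (\<Sum>\<mu>\<in>R. f (ind \<mu>) * Fn \<phi> W (ind \<mu>))"
        by (simp only: Fn_lin_sum[OF finR])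
      also have "\<dots> = (\<Sum>\<mu>\<in>R. if \<mu> = \<nu> then f (ind \<nu>) * \<phi> \<nu> else 0)"
      proof (rule sum.cong)
        fix \<mu> assume m: "\<mu> \<in> R"
        then have "Fn \<phi> W (ind \<mu>) = \<phi> \<mu>" using Fn_ind finW RW by blast
        then show "f (ind \<mu>) * Fn \<phi> W (ind \<mu>) = (if \<mu> = \<nu> then f (ind \<nu>) * \<phi> \<nu> else 0)"
          using \<phi>(3) m by auto
      qed simp
      also have "\<dots> = f (ind \<nu>) * \<phi> \<nu>"
        using nuR finR by simp
      finally have c1: "Fn \<phi> W s = f (ind \<nu>) * \<phi> \<nu>" .
      have "Fn \<phi> W s = 0" by (rule inB0[OF \<phi>(1) sB])
      with c1 \<phi>(2) show ?thesis by simp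
    qed
    have "s = 0" unfolding s_def using fR by (intro sum.neutral) (auto simp: fscale_def fun_eq_iff)
    then have "(\<Sum>x\<in>B. fscale (f x) x) = 0" using s_eq by simp
    then have fB: "\<forall>v\<in>B. f v = 0" using VS.independentD[OF B(2) finB] by blast
    show "f x = 0" using x fR fB by auto
  qed
  have spEq: "VS.span (B \<union> ind ` R) = VS.span (ind ` W)"
  proof
    show "VS.span (B \<union> ind ` R) \<subseteq> VS.span (ind ` W)"
      using B(1) spG RW by (intro VS.span_minimal) (blast intro: VS.span_base)+
    have "G \<union> ind ` R \<subseteq> VS.span (B \<union> ind ` R)"
      using B(3) VS.span_mono[of B "B \<union> ind ` R"] VS.span_superset[of G] VS.span_superset[of "B \<union> ind ` R"] by blast
    then have "VS.span (G \<union> ind ` R) \<subseteq> VS.span (B \<union> ind ` R)"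
      by (metis VS.span_mono VS.span_span)
    then show "VS.span (ind ` W) \<subseteq> VS.span (B \<union> ind ` R)"
      using sp by (intro VS.span_minimal) auto
  qed
  have indW: "VS.independent (ind ` W :: (nat list \<Rightarrow> 'k) set)"
  proof (rule VS.independent_if_scalars_zero)
    show "finite (ind ` W)" using finW by simp
    fix f :: "(nat list \<Rightarrow> 'k) \<Rightarrow> 'k" and x :: "nat list \<Rightarrow> 'k" assume s0: "(\<Sum>x\<in>ind ` W. fscale (f x) x) = 0" and x: "x \<in> ind ` W"
    then obtain w where w: "w \<in> W" "x = ind w" by auto
    have e1: "(\<Sum>x\<in>ind ` W. fscale (f x) x) = (\<Sum>v\<in>W. fscale (f (ind v)) (ind v))"
      by (subst sum.reindex[OF injW]) (simp add: o_def)
    have "(\<Sum>v\<in>W. fscale (f (ind v)) (ind v)) w = (\<Sum>v\<in>W. if v = w then f (ind w) else 0)"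
      unfolding sum_app by (rule sum.cong) (auto simp: fscale_def ind_def)
    also have "\<dots> = f (ind w)" using finW w(1) by simp
    finally have "(\<Sum>x\<in>ind ` W. fscale (f x) x) w = f (ind w)" using e1 by simp
    then show "f x = 0" using s0 w by simp
  qed
  have "VS.dim (ind ` W :: (nat list \<Rightarrow> 'k) set) = card (B \<union> ind ` R)"
    using VS.dim_eq_card[OF spEq indep] .
  moreover have "VS.dim (ind ` W :: (nat list \<Rightarrow> 'k) set) = card W"
    using VS.dim_eq_card_independent[OF indW] card_image[OF inj_on_subset[OF injind]] by simp
  moreover have "card (B \<union> ind ` R) = card B + card R"
  proof -
    have "card (B \<union> ind ` R) = card B + card (ind ` R :: (nat list \<Rightarrow> 'k) set)" using finB finR disj by (simp add: card_Un_disjoint)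
    also have "card (ind ` R :: (nat list \<Rightarrow> 'k) set) = card R" using card_image[OF inj_on_subset[OF injind]] by simp
    finally show ?thesis .
  qed
  ultimately show ?thesis using B(4) by simp
qed




locale cons5 =
  fixes a \<gamma> :: "nat \<Rightarrow> 'k::field" and d :: nat
  assumes d1: "1 \<le> d"
    and recur: "\<forall>n\<ge>d. a n = (\<Sum>i=1..d. \<gamma> i * a (n - i))"
    and gd: "\<gamma> d \<noteq> 0"
    and nz: "\<exists>i<d. a i \<noteq> 0"
begin

definition Cm :: "nat \<Rightarrow> nat \<Rightarrow> 'k" where
  "Cm k l = (if l + 1 < d then (if k = l + 1 then 1 else 0) else \<gamma> (d - k))"

fun mp :: "nat \<Rightarrow> nat \<Rightarrow> nat \<Rightarrow> 'k" where
  "mp 0 i l = (if i = l then 1 else 0)"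
| "mp (Suc b) i l = (\<Sum>k<d. Cm i k * mp b k l)"

lemma rec_sum: "a (n + d) = (\<Sum>i<d. a (n + i) * \<gamma> (d - i))"
proof -
  have "a (n + d) = (\<Sum>j=1..d. \<gamma> j * a (n + d - j))" using recur by simp
  also have "\<dots> = (\<Sum>i<d. a (n + i) * \<gamma> (d - i))"
    by (rule sum.reindex_bij_witness[of _ "\<lambda>i. d - i" "\<lambda>j. d - j"]) (auto simp: ac_simps)
  finally show ?thesis .
qed

lemma Cm_shift: "k < d \<Longrightarrow> (\<Sum>i<d. a (n + i) * Cm i k) = a (n + k + 1)"
proof (cases "k + 1 < d")
  case True
  assume "k < d"
  have "(\<Sum>i<d. a (n + i) * Cm i k) = (\<Sum>i<d. if i = k + 1 then a (n + (k + 1)) else 0)"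
    using True by (intro sum.cong) (auto simp: Cm_def)
  also have "\<dots> = a (n + k + 1)" using True by simp
  finally show ?thesis .
next
  case False
  assume "k < d"
  then have k: "k = d - 1" using False by simp
  have "(\<Sum>i<d. a (n + i) * Cm i k) = (\<Sum>i<d. a (n + i) * \<gamma> (d - i))"
    using False by (intro sum.cong) (auto simp: Cm_def)
  also have "\<dots> = a (n + d)" using rec_sum by simp
  finally show ?thesis using k d1 by simp
qed

lemma mp_seq: "l < d \<Longrightarrow> (\<Sum>i<d. a (n + i) * mp b i l) = a (n + b + l)"
proof (induction b arbitrary: n)
  case 0
  then show ?case by (simp add: if_distrib[of "\<lambda>x. _ * x"] cong: if_cong)
next
  case (Suc b)
  have "(\<Sum>i<d. a (n + i) * mp (Suc b) i l) = (\<Sum>k<d. (\<Sum>i<d. a (n + i) * Cm i k) * mp b k l)"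
  proof -
    have "(\<Sum>i<d. a (n + i) * mp (Suc b) i l) = (\<Sum>i<d. \<Sum>k<d. a (n + i) * Cm i k * mp b k l)"
      by (simp add: sum_distrib_left mult.assoc)
    also have "\<dots> = (\<Sum>k<d. \<Sum>i<d. a (n + i) * Cm i k * mp b k l)"
      by (rule sum.swap)
    also have "\<dots> = (\<Sum>k<d. (\<Sum>i<d. a (n + i) * Cm i k) * mp b k l)"
      by (simp add: sum_distrib_right)
    finally show ?thesis .
  qed
  also have "\<dots> = (\<Sum>k<d. a (Suc n + k) * mp b k l)"
    by (intro sum.cong) (simp_all add: Cm_shift)
  also have "\<dots> = a (Suc n + b + l)" using Suc by blast
  finally show ?case by simp
qed

lemma mp_seq0: "l < d \<Longrightarrow> (\<Sum>i<d. a i * mp b i l) = a (b + l)"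
  using mp_seq[of l 0 b] by simp

lemma row_nz: "\<exists>l<d. a (c + l) \<noteq> 0"
proof (induction c)
  case 0
  then show ?case using nz by simp
next
  case (Suc c)
  then obtain l where l: "l < d" "a (c + l) \<noteq> 0" by blast
  show ?case
  proof (cases "l = 0")
    case False
    then show ?thesis using l by (intro exI[of _ "l - 1"]) auto
  next
    case True
    show ?thesis
    proof (rule ccontr)
      assume "\<not> ?thesis"
      then have z: "\<And>m. m < d \<Longrightarrow> a (Suc c + m) = 0" by blast
      have "a (c + d) = (\<Sum>i<d. a (c + i) * \<gamma> (d - i))" by (rule rec_sum)
      also have "\<dots> = (\<Sum>i<d. if i = 0 then a c * \<gamma> d else 0)"
      proof (intro sum.cong refl)
        fix i assume "i \<in> {..<d}"
        then show "a (c + i) * \<gamma> (d - i) = (if i = 0 then a c * \<gamma> d else 0)"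
          using z[of "i - 1"] by (cases i) auto
      qed
      also have "\<dots> = a c * \<gamma> d" using d1 by simp
      finally have "a (c + d) = a c * \<gamma> d" .
      moreover have "a (c + d) = 0" using z[of "d - 1"] d1 by simp
      ultimately show False using l True gd by simp
    qed
  qed
qed

end



context cons5 begin

definition isY :: "nat \<Rightarrow> bool" where "isY c = (3 \<le> c \<and> c < d + 3)"

definition nk :: "nat \<Rightarrow> nat \<Rightarrow> bool" where
  "nk x y = ((x = 1 \<and> y = 0) \<or> (x = 0 \<and> y = 0) \<or> (x = 0 \<and> y = 2) \<or> (x = 1 \<and> y = 2)
      \<or> (x = 0 \<and> isY y) \<or> (x = 1 \<and> isY y) \<or> (x = 3 \<and> y = 2) \<or> (isY x \<and> y = 0))"

definition stR :: "nat \<Rightarrow> nat \<Rightarrow> 'k" where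
  "stR i j = (if i = 1 \<and> isY j then a (j - 3) else 0)"
definition mvR :: "nat \<Rightarrow> nat \<Rightarrow> nat \<Rightarrow> 'k" where
  "mvR i0 i j = (if i = i0 + 3 \<and> j = 0 then 1 else 0) - (if i = 0 \<and> isY j then Cm i0 (j - 3) else 0)"
definition moR :: "nat \<Rightarrow> nat \<Rightarrow> nat \<Rightarrow> nat \<Rightarrow> 'k" where
  "moR x y i j = (if i = x \<and> j = y then 1 else 0)"

definition pairs :: "(nat \<times> nat) list" where
  "pairs = filter (\<lambda>(x, y). \<not> nk x y) (List.product [0..<d+3] [0..<d+3])"

definition rels :: "(nat \<Rightarrow> nat \<Rightarrow> 'k) list" where
  "rels = stR # map mvR [0..<d] @ map (\<lambda>(x, y). moR x y) pairs"

lemma sumY: "(\<Sum>j<d+3. if isY j then G (j - 3) else 0) = (\<Sum>l<d. G l)"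
proof -
  have "(\<Sum>j<d+3. if isY j then G (j - 3) else 0) = (\<Sum>j\<in>{..<d+3} \<inter> {j. isY j}. G (j - 3))"
    by (simp add: sum.inter_restrict)
  also have "{..<d+3} \<inter> {j. isY j} = {0+3..<d+3}" by (auto simp: isY_def)
  also have "(\<Sum>j\<in>{0+3..<d+3}. G (j - 3)) = (\<Sum>l\<in>{0..<d}. G l)"
    by (subst sum.shift_bounds_nat_ivl) simp
  finally show ?thesis by (simp add: atLeast0LessThan)
qed

lemma sumY': "(\<Sum>j<d+3. if isY j then H j else 0) = (\<Sum>l<d. H (l + 3))"
proof -
  have "(\<Sum>j<d+3. if isY j then H j else 0) = (\<Sum>j<d+3. if isY j then H (j - 3 + 3) else 0)"
  proof (rule sum.cong)
    fix j show "(if isY j then H j else 0) = (if isY j then H (j - 3 + 3) else 0)"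
      by (cases "isY j") (auto simp: isY_def)
  qed simp
  also have "\<dots> = (\<Sum>l<d. H (l + 3))" by (rule sumY)
  finally show ?thesis .
qed

lemma sum_ind: "y < (n::nat) \<Longrightarrow> (\<Sum>j<n. (if j = y then (c::'k) else 0) * G j) = c * G y"
proof -
  assume y: "y < n"
  have "(\<Sum>j<n. (if j = y then c else 0) * G j) = (\<Sum>j<n. if j = y then c * G y else 0)"
    by (rule sum.cong) auto
  also have "\<dots> = c * G y" using y by (subst sum.delta) auto
  finally show ?thesis .
qed

lemma sum_st: "(\<Sum>i<d+3. \<Sum>j<d+3. stR i j * F i j) = (\<Sum>l<d. a l * F 1 (l + 3))"
proof -
  have "(\<Sum>i<d+3. \<Sum>j<d+3. stR i j * F i j) = (\<Sum>i<d+3. if i = 1 then (\<Sum>j<d+3. stR 1 j * F 1 j) else 0)"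
    by (intro sum.cong) (auto simp: stR_def)
  also have "\<dots> = (\<Sum>j<d+3. stR 1 j * F 1 j)" by simp
  also have "\<dots> = (\<Sum>j<d+3. if isY j then a (j - 3) * F 1 (j - 3 + 3) else 0)"
    by (intro sum.cong) (auto simp: stR_def isY_def)
  also have "\<dots> = (\<Sum>l<d. a l * F 1 (l + 3))" by (rule sumY)
  finally show ?thesis .
qed

lemma sum_mo: "x < d + 3 \<Longrightarrow> y < d + 3 \<Longrightarrow> (\<Sum>i<d+3. \<Sum>j<d+3. moR x y i j * F i j) = F x y"
proof -
  assume xy: "x < d + 3" "y < d + 3"
  have "(\<Sum>i<d+3. \<Sum>j<d+3. moR x y i j * F i j) = (\<Sum>i<d+3. if i = x then F x y else 0)"
  proof (rule sum.cong)
    fix i show "(\<Sum>j<d+3. moR x y i j * F i j) = (if i = x then F x y else 0)"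
    proof (cases "i = x")
      case True
      then show ?thesis using sum_ind[OF xy(2), of 1 "F x"] by (simp add: moR_def)
    qed (simp add: moR_def)
  qed simp
  also have "\<dots> = F x y" using xy by simp
  finally show ?thesis .
qed

lemma sum_mv: "i0 < d \<Longrightarrow> (\<Sum>i<d+3. \<Sum>j<d+3. mvR i0 i j * F i j) = F (i0 + 3) 0 - (\<Sum>l<d. Cm i0 l * F 0 (l + 3))"
proof -
  assume i0: "i0 < d"
  have "(\<Sum>i<d+3. \<Sum>j<d+3. mvR i0 i j * F i j) =
     (\<Sum>i<d+3. \<Sum>j<d+3. (if i = i0 + 3 \<and> j = 0 then F i j else 0) - (if i = 0 \<and> isY j then Cm i0 (j - 3) * F i j else 0))"
    by (intro sum.cong) (auto simp: mvR_def left_diff_distrib)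
  also have "\<dots> = (\<Sum>i<d+3. \<Sum>j<d+3. (if i = i0 + 3 \<and> j = 0 then F i j else 0)) - (\<Sum>i<d+3. \<Sum>j<d+3. (if i = 0 \<and> isY j then Cm i0 (j - 3) * F i j else 0))"
    by (simp add: sum_subtractf)
  also have "(\<Sum>i<d+3. \<Sum>j<d+3. (if i = i0 + 3 \<and> j = 0 then F i j else 0)) = (\<Sum>i<d+3. if i = i0 + 3 then F (i0+3) 0 else 0)"
  proof (rule sum.cong)
    fix i assume "i \<in> {..<d+3}"
    show "(\<Sum>j<d+3. (if i = i0 + 3 \<and> j = 0 then F i j else 0)) = (if i = i0 + 3 then F (i0+3) 0 else 0)"
    proof (cases "i = i0 + 3")
      case True
      then have "(\<Sum>j<d+3. (if i = i0 + 3 \<and> j = 0 then F i j else 0)) = (\<Sum>j<d+3. if j = 0 then F (i0+3) 0 else 0)"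
        by (intro sum.cong) auto
      also have "\<dots> = F (i0+3) 0" by (subst sum.delta) auto
      finally show ?thesis using True by simp
    qed simp
  qed simp
  also have "\<dots> = F (i0 + 3) 0" using i0 by simp
  also have "(\<Sum>i<d+3. \<Sum>j<d+3. (if i = 0 \<and> isY j then Cm i0 (j - 3) * F i j else 0)) = (\<Sum>i<d+3. if i = 0 then (\<Sum>j<d+3. if isY j then Cm i0 (j - 3) * F 0 j else 0) else 0)"
    by (intro sum.cong) auto
  also have "\<dots> = (\<Sum>j<d+3. if isY j then Cm i0 (j - 3) * F 0 j else 0)" by simp
  also have "\<dots> = (\<Sum>l<d. Cm i0 (l + 3 - 3) * F 0 (l + 3))" by (rule sumY')
  finally show ?thesis by simp
qed

lemma set_pairs: "set pairs = {(x,y). x < d+3 \<and> y < d+3 \<and> \<not> nk x y}"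
  unfolding pairs_def by auto

lemma set_rels: "set rels = insert stR (mvR ` {0..<d} \<union> (\<lambda>(x, y). moR x y) ` set pairs)"
  unfolding rels_def by simp

lemma rels_nz: "\<forall>r\<in>set rels. \<exists>i<d+3. \<exists>j<d+3. r i j \<noteq> 0"
proof
  fix r assume "r \<in> set rels"
  then have "r = stR \<or> r \<in> mvR ` {0..<d} \<or> r \<in> (\<lambda>(x, y). moR x y) ` set pairs"
    unfolding set_rels by blast
  then show "\<exists>i<d+3. \<exists>j<d+3. r i j \<noteq> 0"
  proof (elim disjE imageE)
    assume r: "r = stR"
    obtain i where i: "i < d" "a i \<noteq> 0" using nz by blast
    have "stR 1 (i + 3) \<noteq> 0" using i by (simp add: stR_def isY_def)
    moreover have "(1::nat) < d + 3" "i + 3 < d + 3" using i by simp_all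
    ultimately show ?thesis using r by blast
  next
    fix i0 assume "r = mvR i0" "i0 \<in> {0..<d}"
    moreover have "mvR i0 (i0 + 3) 0 \<noteq> 0" by (simp add: mvR_def)
    moreover have "i0 + 3 < d + 3" "(0::nat) < d + 3" using calculation by simp_all
    ultimately show ?thesis by blast
  next
    fix p assume r: "r = (\<lambda>(x, y). moR x y) p" and p: "p \<in> set pairs"
    obtain x y where xy: "p = (x, y)" by (cases p)
    have "x < d + 3" "y < d + 3" using p xy by (simp_all add: set_pairs)
    moreover have "moR x y x y \<noteq> 0" by (simp add: moR_def)
    ultimately show ?thesis using r xy by auto
  qed
qed

lemma mo_in: "x < d + 3 \<Longrightarrow> y < d + 3 \<Longrightarrow> \<not> nk x y \<Longrightarrow> moR x y \<in> set rels"
proof -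
  assume "x < d + 3" "y < d + 3" "\<not> nk x y"
  then have "(x, y) \<in> set pairs" by (simp add: set_pairs)
  then have "moR x y \<in> (\<lambda>(x, y). moR x y) ` set pairs" by (rule rev_image_eqI) simp
  then show ?thesis unfolding set_rels by blast
qed

lemma mv_in: "i0 < d \<Longrightarrow> mvR i0 \<in> set rels"
  unfolding set_rels by simp

lemma st_in: "stR \<in> set rels"
  unfolding set_rels by simp

end



context cons5 begin

definition NK :: "(nat \<times> nat) set" where
  "NK = {p \<in> {0..<d+3} \<times> {0..<d+3}. nk (fst p) (snd p)}"

lemma nkset: "NK =
   {(1,0),(0,0),(0,2),(1,2),(3,2)} \<union> (Pair 0 ` {3..<d+3} \<union> (Pair (Suc 0) ` {3..<d+3} \<union> (\<lambda>x. (x,0)) ` {3..<d+3}))"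
proof (rule set_eqI)
  fix p :: "nat \<times> nat"
  obtain x y where p: "p = (x, y)" by (cases p)
  have "(x, y) \<in> NK \<longleftrightarrow> x < d + 3 \<and> y < d + 3 \<and> nk x y" unfolding NK_def by simp
  also have "\<dots> \<longleftrightarrow> ((x = 1 \<and> y = 0) \<or> (x = 0 \<and> y = 0) \<or> (x = 0 \<and> y = 2) \<or> (x = 1 \<and> y = 2)
      \<or> (x = 0 \<and> isY y) \<or> (x = 1 \<and> isY y) \<or> (x = 3 \<and> y = 2) \<or> (isY x \<and> y = 0))"
    unfolding nk_def isY_def using d1 by linarith
  also have "\<dots> \<longleftrightarrow> (x, y) \<in> {(1,0),(0,0),(0,2),(1,2),(3,2)} \<union> (Pair 0 ` {3..<d+3} \<union> (Pair (Suc 0) ` {3..<d+3} \<union> (\<lambda>x. (x,0)) ` {3..<d+3}))"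
    unfolding isY_def by auto
  finally show "p \<in> NK \<longleftrightarrow> p \<in> {(1,0),(0,0),(0,2),(1,2),(3,2)} \<union> (Pair 0 ` {3..<d+3} \<union> (Pair (Suc 0) ` {3..<d+3} \<union> (\<lambda>x. (x,0)) ` {3..<d+3}))"
    using p by simp
qed

lemma cardP: "card (Pair c ` {3..<d+3}) = d"
  by (subst card_image) (simp_all add: inj_on_def)

lemma cardP2: "card ((\<lambda>x. (x, c)) ` {3..<d+3}) = d"
  by (subst card_image) (simp_all add: inj_on_def)

lemma card_nk: "card NK = 3 * d + 5"
proof -
  let ?S = "{3..<d+3}"
  have c0: "card {(1::nat,0::nat),(0,0),(0,2),(1,2),(3,2)} = 5" by simp
  have "card (Pair (Suc 0) ` ?S \<union> (\<lambda>x. (x,0::nat)) ` ?S) = card (Pair (Suc 0) ` ?S) + card ((\<lambda>x. (x,0::nat)) ` ?S)"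
    by (rule card_Un_disjoint) auto
  then have e1: "card (Pair (Suc 0) ` ?S \<union> (\<lambda>x. (x,0::nat)) ` ?S) = 2 * d"
    unfolding cardP cardP2 by simp
  have "card (Pair (0::nat) ` ?S \<union> (Pair (Suc 0) ` ?S \<union> (\<lambda>x. (x,0)) ` ?S)) = card (Pair (0::nat) ` ?S) + card (Pair (Suc 0) ` ?S \<union> (\<lambda>x. (x,0)) ` ?S)"
    by (rule card_Un_disjoint) auto
  then have e2: "card (Pair (0::nat) ` ?S \<union> (Pair (Suc 0) ` ?S \<union> (\<lambda>x. (x,0)) ` ?S)) = 3 * d"
    unfolding cardP e1 by simp
  have "card ({(1,0),(0,0),(0,2),(1,2),(3,2)} \<union> (Pair 0 ` ?S \<union> (Pair (Suc 0) ` ?S \<union> (\<lambda>x. (x,0)) ` ?S))) = card {(1::nat,0::nat),(0,0),(0,2),(1,2),(3,2)} + card (Pair 0 ` ?S \<union> (Pair (Suc 0) ` ?S \<union> (\<lambda>x. (x,0)) ` ?S))"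
    by (rule card_Un_disjoint) auto
  then have "card ({(1,0),(0,0),(0,2),(1,2),(3,2)} \<union> (Pair 0 ` ?S \<union> (Pair (Suc 0) ` ?S \<union> (\<lambda>x. (x,0)) ` ?S))) = 3 * d + 5"
    unfolding c0 e2 by simp
  then show ?thesis by (simp only: nkset)
qed

lemma length_rels: "length rels = d^2 + 4*d + 5"
proof -
  let ?xs = "List.product [0..<d+3] [0..<d+3]"
  let ?P = "\<lambda>p. nk (fst p) (snd p)"
  have dx: "distinct (filter ?P ?xs)" by (simp add: distinct_product)
  have "length (filter ?P ?xs) = card (set (filter ?P ?xs))"
    using distinct_card[OF dx] by simp
  also have "set (filter ?P ?xs) = NK" unfolding NK_def by auto
  finally have l1: "length (filter ?P ?xs) = 3 * d + 5" using card_nk by simp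
  have l2: "length (filter (\<lambda>p. \<not> ?P p) ?xs) = length pairs"
    unfolding pairs_def by (simp add: case_prod_unfold)
  have "length (filter ?P ?xs) + length (filter (\<lambda>p. \<not> ?P p) ?xs) = length ?xs"
    by (rule sum_length_filter_compl)
  then have "length pairs + (3 * d + 5) = (d + 3) * (d + 3)" using l1 l2 by simp
  then have "length pairs = d * d + 3 * d + 4" by (simp add: algebra_simps)
  then show ?thesis unfolding rels_def by (simp add: power2_eq_square)
qed

end



context cons5 begin

fun ydec :: "nat list \<Rightarrow> (nat \<times> nat \<times> nat) option" where
  "ydec [] = None"
| "ydec (c # w) = (if c = 0 then map_option (\<lambda>(x, i, b). (Suc x, i, b)) (ydec w)
     else if isY c \<and> (\<forall>z\<in>set w. z = 0) then Some (0, c - 3, length w) else None)"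

definition nzf :: "nat list \<Rightarrow> nat list" where "nzf w = filter (\<lambda>c. c \<noteq> 0) w"

lemma ydec_Some: "ydec w = Some (x, i, b) \<Longrightarrow> w = replicate x 0 @ (i + 3) # replicate b 0 \<and> i < d"
proof (induction w arbitrary: x i b)
  case Nil then show ?case by simp
next
  case (Cons c w)
  show ?case
  proof (cases "c = 0")
    case True
    then obtain x' where "ydec w = Some (x', i, b)" "x = Suc x'" using Cons.prems by (auto split: if_splits)
    then show ?thesis using Cons.IH True by auto
  next
    case False
    then have h: "isY c" "\<forall>z\<in>set w. z = 0" "x = 0" "i = c - 3" "b = length w" using Cons.prems by (auto split: if_splits)
    then have "w = replicate b 0" by (simp add: replicate_length_same)
    then show ?thesis using h by (auto simp: isY_def)
  qed
qed

lemma ydec_rep: "i < d \<Longrightarrow> ydec (replicate x 0 @ (i + 3) # replicate b 0) = Some (x, i, b)"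
  by (induction x) (auto simp: isY_def)

lemma ydec_nzf: "ydec w = Some (x, i, b) \<Longrightarrow> nzf w = [i + 3] \<and> i < d"
  using ydec_Some[of w x i b] by (auto simp: nzf_def)

lemma nzf_app: "nzf (u @ v) = nzf u @ nzf v" by (simp add: nzf_def)
lemma nzf_Cons: "nzf (c # v) = (if c = 0 then nzf v else c # nzf v)" by (simp add: nzf_def)
lemma nzf_nil: "nzf u = [] \<longleftrightarrow> (\<forall>z\<in>set u. z = 0)" by (auto simp: nzf_def filter_empty_conv)

lemma ydec_mid: "ydec (u @ c # v) = Some p \<Longrightarrow> c \<noteq> 0 \<Longrightarrow> (\<forall>z\<in>set u. z = 0) \<and> (\<forall>z\<in>set v. z = 0) \<and> isY c"
proof -
  assume y: "ydec (u @ c # v) = Some p" and c: "c \<noteq> 0"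
  obtain x i b where p: "p = (x, i, b)" by (cases p)
  have "nzf (u @ c # v) = [i + 3]" "i < d" using ydec_nzf y p by blast+
  then have "nzf u @ c # nzf v = [i + 3]" using c by (simp add: nzf_app nzf_Cons)
  then have "nzf u = [] \<and> nzf v = [] \<and> c = i + 3" by (simp add: append_eq_Cons_conv Cons_eq_append_conv)
  then show ?thesis using \<open>i < d\<close> by (auto simp: nzf_nil isY_def)
qed

lemma allz_rep: "\<forall>z\<in>set u. z = 0 \<Longrightarrow> u = replicate (length u) (0::nat)"
  by (simp add: replicate_length_same)

definition Gv :: "(nat \<Rightarrow> nat \<Rightarrow> 'k) \<Rightarrow> nat list \<Rightarrow> 'k" where
  "Gv h w = (case ydec w of None \<Rightarrow> 0 | Some (x, i, b) \<Rightarrow> h b i)"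

definition pw :: "(nat list \<Rightarrow> 'k) \<Rightarrow> nat list \<Rightarrow> 'k" where
  "pw \<psi> w = (case w of [] \<Rightarrow> 0 | c # w' \<Rightarrow> if c = 1 then \<psi> w' else 0)"

definition qw :: "(nat list \<Rightarrow> 'k) \<Rightarrow> nat list \<Rightarrow> 'k" where
  "qw \<psi> w = (if w \<noteq> [] \<and> last w = 2 then \<psi> (butlast w) else 0)"

definition monoP :: "(nat list \<Rightarrow> 'k) \<Rightarrow> bool" where
  "monoP \<phi> = (\<forall>u x y v. \<phi> (u @ [x, y] @ v) \<noteq> 0 \<longrightarrow> nk x y)"
definition hdP :: "(nat list \<Rightarrow> 'k) \<Rightarrow> bool" where
  "hdP \<phi> = (\<forall>y v. \<phi> (y # v) \<noteq> 0 \<longrightarrow> y = 0 \<or> isY y)"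
definition mvP :: "(nat list \<Rightarrow> 'k) \<Rightarrow> bool" where
  "mvP \<phi> = (\<forall>i0<d. \<forall>u v. \<phi> (u @ [i0 + 3, 0] @ v) = (\<Sum>l<d. Cm i0 l * \<phi> (u @ [0, l + 3] @ v)))"
definition no1P :: "(nat list \<Rightarrow> 'k) \<Rightarrow> bool" where
  "no1P \<phi> = (\<forall>w. \<phi> w \<noteq> 0 \<longrightarrow> 1 \<notin> set w)"
definition stP :: "nat \<Rightarrow> (nat list \<Rightarrow> 'k) \<Rightarrow> bool" where
  "stP N \<phi> = (\<forall>u v. length u + length v + 2 = N \<longrightarrow> (\<Sum>l<d. a l * \<phi> (u @ [1, l + 3] @ v)) = 0)"

lemma Gv_mv:
  assumes hs: "\<And>b i. h (Suc b) i = (\<Sum>k<d. Cm i k * h b k)"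
  shows "mvP (Gv h)"
  unfolding mvP_def
proof (intro allI impI)
  fix i0 u v assume i0: "i0 < d"
  show "Gv h (u @ [i0 + 3, 0] @ v) = (\<Sum>l<d. Cm i0 l * Gv h (u @ [0, l + 3] @ v))"
  proof (cases "(\<forall>z\<in>set u. z = 0) \<and> (\<forall>z\<in>set v. z = 0)")
    case True
    then obtain m n where uv: "u = replicate m 0" "v = replicate n 0" using allz_rep by blast
    have e: "u @ [i0 + 3, 0] @ v = replicate m 0 @ (i0 + 3) # replicate (Suc n) 0"
      using uv by simp
    have "ydec (u @ [i0 + 3, 0] @ v) = Some (m, i0, Suc n)" unfolding e by (rule ydec_rep[OF i0])
    then have l: "Gv h (u @ [i0 + 3, 0] @ v) = h (Suc (length v)) i0"
      using uv by (simp add: Gv_def)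
    have r: "Gv h (u @ [0, l + 3] @ v) = h (length v) l" if "l < d" for l
    proof -
      have e: "u @ [0, l + 3] @ v = replicate (Suc m) 0 @ (l + 3) # replicate n 0"
        using uv by (simp add: replicate_app_Cons_same)
      have "ydec (u @ [0, l + 3] @ v) = Some (Suc m, l, n)" unfolding e by (rule ydec_rep[OF that])
      then show ?thesis using uv by (simp add: Gv_def)
    qed
    show ?thesis using l r hs by simp
  next
    case False
    have n1: "ydec (u @ [i0 + 3, 0] @ v) = None"
    proof (rule ccontr)
      assume "ydec (u @ [i0 + 3, 0] @ v) \<noteq> None"
      then obtain p where "ydec (u @ (i0 + 3) # (0 # v)) = Some p" by auto
      then have "(\<forall>z\<in>set u. z = 0) \<and> (\<forall>z\<in>set (0 # v). z = 0)" using ydec_mid[of u "i0+3" "0 # v" p] by simp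
      then show False using False by simp
    qed
    have n2: "ydec (u @ [0, l + 3] @ v) = None" for l
    proof (rule ccontr)
      assume "ydec (u @ [0, l + 3] @ v) \<noteq> None"
      then obtain p where "ydec ((u @ [0]) @ (l + 3) # v) = Some p" by auto
      then have "(\<forall>z\<in>set (u @ [0]). z = 0) \<and> (\<forall>z\<in>set v. z = 0)" using ydec_mid[of "u @ [0]" "l+3" v p] by simp
      then show False using False by simp
    qed
    show ?thesis using n1 n2 by (simp add: Gv_def)
  qed
qed

lemma pw_mv: "mvP \<psi> \<Longrightarrow> mvP (pw \<psi>)"
  unfolding mvP_def
proof (intro allI impI)
  fix i0 u v assume m: "\<forall>i0<d. \<forall>u v. \<psi> (u @ [i0 + 3, 0] @ v) = (\<Sum>l<d. Cm i0 l * \<psi> (u @ [0, l + 3] @ v))" and i0: "i0 < d"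
  show "pw \<psi> (u @ [i0 + 3, 0] @ v) = (\<Sum>l<d. Cm i0 l * pw \<psi> (u @ [0, l + 3] @ v))"
  proof (cases u)
    case Nil
    then show ?thesis by (simp add: pw_def)
  next
    case (Cons c u')
    then show ?thesis using m i0 by (simp add: pw_def)
  qed
qed

lemma qw_mv: "mvP \<psi> \<Longrightarrow> mvP (qw \<psi>)"
  unfolding mvP_def
proof (intro allI impI)
  fix i0 u v assume m: "\<forall>i0<d. \<forall>u v. \<psi> (u @ [i0 + 3, 0] @ v) = (\<Sum>l<d. Cm i0 l * \<psi> (u @ [0, l + 3] @ v))" and i0: "i0 < d"
  show "qw \<psi> (u @ [i0 + 3, 0] @ v) = (\<Sum>l<d. Cm i0 l * qw \<psi> (u @ [0, l + 3] @ v))"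
  proof (cases "v = []")
    case True
    then show ?thesis by (simp add: qw_def)
  next
    case False
    then have "butlast (u @ [x, y] @ v) = u @ [x, y] @ butlast v" for x y by (simp add: butlast_append)
    then show ?thesis using m i0 False by (simp add: qw_def)
  qed
qed

end



context cons5 begin

lemma Gv_mono: "monoP (Gv h)"
  unfolding monoP_def
proof (intro allI impI)
  fix u x y v assume ne: "Gv h (u @ [x, y] @ v) \<noteq> 0"
  then obtain p where p: "ydec (u @ [x, y] @ v) = Some p" by (cases "ydec (u @ [x, y] @ v)") (auto simp: Gv_def)
  show "nk x y"
  proof (cases "x = 0")
    case False
    have "ydec (u @ x # (y # v)) = Some p" using p by simp
    then show ?thesis using ydec_mid[of u x "y # v" p] False by (simp add: nk_def)
  next
    case True
    show ?thesis
    proof (cases "y = 0")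
      case False
      have "ydec ((u @ [x]) @ y # v) = Some p" using p by simp
      then show ?thesis using ydec_mid[of "u @ [x]" y v p] False True by (simp add: nk_def)
    qed (simp add: nk_def True)
  qed
qed

lemma Gv_hd: "hdP (Gv h)"
  unfolding hdP_def Gv_def by (auto split: option.splits if_splits)

lemma Gv_no1: "no1P (Gv h)"
  unfolding no1P_def
proof (intro allI impI)
  fix w assume ne: "Gv h w \<noteq> 0"
  then obtain p where p: "ydec w = Some p" by (cases "ydec w") (auto simp: Gv_def)
  show "1 \<notin> set w"
  proof
    assume "1 \<in> set w"
    then obtain u v where "w = u @ 1 # v" by (meson split_list)
    then show False using ydec_mid[of u 1 v p] p by (simp add: isY_def)
  qed
qed

lemma qw_mono: assumes h0: "\<And>i. i \<noteq> 0 \<Longrightarrow> h 0 i = 0" shows "monoP (qw (Gv h))"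
  unfolding monoP_def
proof (intro allI impI)
  fix u x y v assume ne: "qw (Gv h) (u @ [x, y] @ v) \<noteq> 0"
  show "nk x y"
  proof (cases "v = []")
    case False
    then have "butlast (u @ [x, y] @ v) = u @ [x, y] @ butlast v" by (simp add: butlast_append)
    then have "Gv h (u @ [x, y] @ butlast v) \<noteq> 0" using ne by (simp add: qw_def split: if_splits)
    then show ?thesis using Gv_mono unfolding monoP_def by blast
  next
    case True
    then have y2: "y = 2" and g: "Gv h (u @ [x]) \<noteq> 0" using ne by (simp_all add: qw_def butlast_append split: if_splits)
    then obtain m i b where p: "ydec (u @ [x]) = Some (m, i, b)" by (cases "ydec (u @ [x])") (auto simp: Gv_def)
    then have e: "u @ [x] = replicate m 0 @ (i + 3) # replicate b 0" using ydec_Some by blast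
    have hv: "h b i \<noteq> 0" using g p by (simp add: Gv_def)
    show ?thesis
    proof (cases b)
      case 0
      then have "x = i + 3" using e by (metis append_butlast_last_id last_ConsL last_appendR last_snoc list.distinct(1) replicate_empty)
      moreover have "i = 0" using hv 0 h0 by blast
      ultimately show ?thesis using y2 by (simp add: nk_def)
    next
      case (Suc b')
      then have "last (u @ [x]) = 0" using e by simp
      then have "x = 0" by simp
      then show ?thesis using y2 by (simp add: nk_def)
    qed
  qed
qed

lemma qw_hd: "hdP (qw (Gv h))"
  unfolding hdP_def
proof (intro allI impI)
  fix y v assume ne: "qw (Gv h) (y # v) \<noteq> 0"
  show "y = 0 \<or> isY y"
  proof (cases "v = []")
    case True
    then show ?thesis using ne by (simp add: qw_def Gv_def split: if_splits)
  next
    case False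
    then have "Gv h (y # butlast v) \<noteq> 0" using ne by (simp add: qw_def split: if_splits)
    then show ?thesis using Gv_hd unfolding hdP_def by blast
  qed
qed

lemma qw_no1: "no1P (qw (Gv h))"
  unfolding no1P_def
proof (intro allI impI)
  fix w assume ne: "qw (Gv h) w \<noteq> 0"
  then have w: "w \<noteq> []" "last w = 2" "Gv h (butlast w) \<noteq> 0" by (simp_all add: qw_def split: if_splits)
  have "1 \<notin> set (butlast w)" using Gv_no1 w(3) unfolding no1P_def by blast
  moreover have "w = butlast w @ [last w]" using w(1) by simp
  ultimately show "1 \<notin> set w" using w(2) by (metis Un_iff empty_iff empty_set insert_iff list.set(2) numeral_eq_one_iff semiring_norm(85) set_append)
qed

lemma pw_mono: "monoP \<psi> \<Longrightarrow> hdP \<psi> \<Longrightarrow> monoP (pw \<psi>)"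
  unfolding monoP_def
proof (intro allI impI)
  fix u x y v assume m: "\<forall>u x y v. \<psi> (u @ [x, y] @ v) \<noteq> 0 \<longrightarrow> nk x y" and hd: "hdP \<psi>"
    and ne: "pw \<psi> (u @ [x, y] @ v) \<noteq> 0"
  show "nk x y"
  proof (cases u)
    case Nil
    then have "x = 1" "\<psi> (y # v) \<noteq> 0" using ne by (simp_all add: pw_def split: if_splits)
    then show ?thesis using hd unfolding hdP_def by (auto simp: nk_def)
  next
    case (Cons c u')
    then have "\<psi> (u' @ [x, y] @ v) \<noteq> 0" using ne by (simp add: pw_def split: if_splits)
    then show ?thesis using m by blast
  qed
qed

lemma no1_st: "no1P \<phi> \<Longrightarrow> stP N \<phi>"
  unfolding no1P_def stP_def by (auto intro!: sum.neutral)

lemma pw_st: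
  assumes n1: "no1P \<psi>" and s: "\<And>v. length v + 2 = N \<Longrightarrow> (\<Sum>l<d. a l * \<psi> ((l + 3) # v)) = 0"
  shows "stP N (pw \<psi>)"
  unfolding stP_def
proof (intro allI impI)
  fix u v :: "nat list" assume len: "length u + length v + 2 = N"
  show "(\<Sum>l<d. a l * pw \<psi> (u @ [1, l + 3] @ v)) = 0"
  proof (cases u)
    case Nil
    then show ?thesis using s[of v] len by (simp add: pw_def)
  next
    case (Cons c u')
    have "\<psi> (u' @ [1, l + 3] @ v) = 0" for l using n1 unfolding no1P_def by fastforce
    then show ?thesis using Cons by (auto simp: pw_def intro!: sum.neutral)
  qed
qed

lemma Gv_Y: "l < d \<Longrightarrow> Gv h ((l + 3) # v) = (if \<forall>z\<in>set v. z = 0 then h (length v) l else 0)"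
  by (auto simp: Gv_def isY_def)

lemma Gv_X: "Gv h (0 # v) = Gv h v"
  by (simp add: Gv_def split: option.splits)

lemma sum_if_const: "(\<Sum>l\<in>A. if P then f l else (0::'k)) = (if P then (\<Sum>l\<in>A. f l) else 0)"
  by (cases P) simp_all

lemma Gv_st:
  assumes "(\<Sum>l<d. a l * h (N - 2) l) = 0" "2 \<le> N"
  shows "stP N (pw (Gv h))"
proof (rule pw_st[OF Gv_no1])
  fix v :: "nat list" assume len: "length v + 2 = N"
  have "(\<Sum>l<d. a l * Gv h ((l + 3) # v)) = (\<Sum>l<d. if \<forall>z\<in>set v. z = 0 then a l * h (N - 2) l else 0)"
    by (rule sum.cong) (use len in \<open>auto simp: Gv_Y\<close>)
  also have "\<dots> = 0" unfolding sum_if_const using assms(1) by simp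
  finally show "(\<Sum>l<d. a l * Gv h ((l + 3) # v)) = 0" .
qed

lemma qGv_st:
  assumes "(\<Sum>l<d. a l * h (N - 3) l) = 0" "3 \<le> N"
  shows "stP N (pw (qw (Gv h)))"
proof (rule pw_st[OF qw_no1])
  fix v :: "nat list" assume len: "length v + 2 = N"
  have "(\<Sum>l<d. a l * qw (Gv h) ((l + 3) # v)) = (\<Sum>l<d. if v \<noteq> [] \<and> last v = 2 \<and> (\<forall>z\<in>set (butlast v). z = 0) then a l * h (N - 3) l else 0)"
  proof (rule sum.cong)
    fix l assume l: "l \<in> {..<d}"
    show "a l * qw (Gv h) ((l + 3) # v) = (if v \<noteq> [] \<and> last v = 2 \<and> (\<forall>z\<in>set (butlast v). z = 0) then a l * h (N - 3) l else 0)"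
    proof (cases "v = []")
      case False
      then have "butlast ((l + 3) # v) = (l + 3) # butlast v" by simp
      moreover have "length (butlast v) = N - 3" using len by simp
      ultimately show ?thesis using False l by (auto simp: qw_def Gv_Y)
    qed (simp add: qw_def)
  qed simp
  also have "\<dots> = 0" unfolding sum_if_const using assms(1) by simp
  finally show "(\<Sum>l<d. a l * qw (Gv h) ((l + 3) # v)) = 0" .
qed

definition Gen :: "nat \<Rightarrow> (nat list \<Rightarrow> 'k) set" where
  "Gen N = {sandwich (d+3) u r v | u r v. r \<in> set rels \<and> u \<in> words (d+3) (length u) \<and>
        v \<in> words (d+3) (length v) \<and> length u + length v + 2 = N}"

lemma ideal_Gen: "ideal_deg (d+3) rels N = VS.span (Gen N)"
  unfolding ideal_deg_def Gen_def by simp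

lemma words_iff: "w \<in> words g n \<longleftrightarrow> length w = n \<and> set w \<subseteq> {0..<g}"
  by (simp add: words_def)

lemma finite_words: "finite (words g n)"
proof -
  have "words g n = {w. set w \<subseteq> {0..<g} \<and> length w = n}" by (auto simp: words_def)
  then show ?thesis using finite_lists_length_eq[of "{0..<g}" n] by simp
qed

lemma Fn_sandwich:
  assumes "u \<in> words (d+3) (length u)" "v \<in> words (d+3) (length v)" "length u + length v + 2 = N"
  shows "Fn \<phi> (words (d+3) N) (sandwich (d+3) u r v) = (\<Sum>i<d+3. \<Sum>j<d+3. r i j * \<phi> (u @ [i, j] @ v))"
proof -
  have inW: "u @ [i, j] @ v \<in> words (d+3) N" if "i < d + 3" "j < d + 3" for i j
    using assms that by (auto simp: words_iff)
  have "Fn \<phi> (words (d+3) N) (sandwich (d+3) u r v) =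
     (\<Sum>z\<in>words (d+3) N. \<Sum>i<d+3. \<Sum>j<d+3. if z = u @ [i, j] @ v then r i j * \<phi> z else 0)"
    unfolding Fn_def sandwich_def by (simp add: sum_distrib_right if_distrib[of "\<lambda>x. x * _"] cong: if_cong)
  also have "\<dots> = (\<Sum>i<d+3. \<Sum>j<d+3. \<Sum>z\<in>words (d+3) N. if z = u @ [i, j] @ v then r i j * \<phi> z else 0)"
    by (subst sum.swap) (simp only: sum.swap[of _ "words (d+3) N"])
  also have "\<dots> = (\<Sum>i<d+3. \<Sum>j<d+3. r i j * \<phi> (u @ [i, j] @ v))"
  proof (intro sum.cong refl)
    fix i j assume "i \<in> {..<d+3}" "j \<in> {..<d+3}"
    then have "u @ [i, j] @ v \<in> words (d+3) N" using inW by simp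
    moreover have "finite (words (d+3) N)" by (rule finite_words)
    ultimately show "(\<Sum>z\<in>words (d+3) N. if z = u @ [i, j] @ v then r i j * \<phi> z else 0) = r i j * \<phi> (u @ [i, j] @ v)"
      by (simp add: sum.delta')
  qed
  finally show ?thesis .
qed

end



context cons5 begin

lemma fun_ok:
  assumes m: "monoP \<phi>" and mv: "mvP \<phi>" and st: "stP N \<phi>" and g: "g \<in> Gen N"
  shows "Fn \<phi> (words (d+3) N) g = 0"
proof -
  obtain u r v where g: "g = sandwich (d+3) u r v" and r: "r \<in> set rels"
    and uw: "u \<in> words (d+3) (length u)" and vw: "v \<in> words (d+3) (length v)" and len: "length u + length v + 2 = N"
    using g unfolding Gen_def by blast
  have F: "Fn \<phi> (words (d+3) N) g = (\<Sum>i<d+3. \<Sum>j<d+3. r i j * \<phi> (u @ [i, j] @ v))"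
    unfolding g by (rule Fn_sandwich[OF uw vw len])
  have "r = stR \<or> r \<in> mvR ` {0..<d} \<or> r \<in> (\<lambda>(x, y). moR x y) ` set pairs"
    using r unfolding set_rels by blast
  then show ?thesis
  proof (elim disjE imageE)
    assume "r = stR"
    then show ?thesis using F sum_st st len unfolding stP_def by simp
  next
    fix i0 assume r: "r = mvR i0" "i0 \<in> {0..<d}"
    then show ?thesis using F sum_mv[of i0] mv unfolding mvP_def by simp
  next
    fix p assume r: "r = (\<lambda>(x, y). moR x y) p" and p: "p \<in> set pairs"
    obtain x y where xy: "p = (x, y)" by (cases p)
    have xy2: "x < d + 3" "y < d + 3" "\<not> nk x y" using p xy by (simp_all add: set_pairs)
    have "\<phi> (u @ [x, y] @ v) = 0" using m xy2(3) unfolding monoP_def by blast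
    then show ?thesis using F r xy sum_mo[OF xy2(1,2)] by simp
  qed
qed

lemma ind_fun:
  assumes noY: "\<forall>c\<in>set \<nu>. \<not> isY c" and b: "set (butlast \<nu>) \<subseteq> {0, 1}" and t: "set (tl \<nu>) \<subseteq> {0, 2}"
  shows "monoP (ind \<nu>)" "mvP (ind \<nu>)" "stP N (ind \<nu>)"
proof -
  show "monoP (ind \<nu>)"
    unfolding monoP_def
  proof (intro allI impI)
    fix u x y v assume "ind \<nu> (u @ [x, y] @ v) \<noteq> 0"
    then have e: "\<nu> = u @ [x, y] @ v" by (simp add: ind_def split: if_splits)
    have "x \<in> set (butlast \<nu>)" unfolding e by (simp add: butlast_append)
    moreover have "y \<in> set (tl \<nu>)" unfolding e by (cases u) auto
    ultimately show "nk x y" using b t by (auto simp: nk_def)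
  qed
  show "mvP (ind \<nu>)"
    unfolding mvP_def
  proof (intro allI impI)
    fix i0 u v assume i0: "i0 < d"
    have "(ind \<nu> :: nat list \<Rightarrow> 'k) (u @ [i0 + 3, 0] @ v) = 0" using noY i0 by (auto simp: ind_def isY_def)
    moreover have "(ind \<nu> :: nat list \<Rightarrow> 'k) (u @ [0, l + 3] @ v) = 0" if "l < d" for l using noY that by (auto simp: ind_def isY_def)
    moreover have "(\<Sum>l<d. Cm i0 l * ind \<nu> (u @ [0, l + 3] @ v)) = 0"
      by (rule sum.neutral) (use calculation(2) in simp)
    ultimately show "ind \<nu> (u @ [i0 + 3, 0] @ v) = (\<Sum>l<d. Cm i0 l * ind \<nu> (u @ [0, l + 3] @ v))" by simp
  qed
  show "stP N (ind \<nu>)"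
    unfolding stP_def
  proof (intro allI impI)
    fix u v :: "nat list"
    have "(ind \<nu> :: nat list \<Rightarrow> 'k) (u @ [1, l + 3] @ v) = 0" if "l < d" for l using noY that by (auto simp: ind_def isY_def)
    then show "(\<Sum>l<d. a l * ind \<nu> (u @ [1, l + 3] @ v)) = 0" by simp
  qed
qed

lemma hs_mp: "mp (Suc b) i l = (\<Sum>k<d. Cm i k * mp b k l)" by simp

lemma hs_comb: "(\<lambda>b i. mp b i k * c1 - mp b i k' * c2) (Suc b) i = (\<Sum>j<d. Cm i j * (\<lambda>b i. mp b i k * c1 - mp b i k' * c2) b j)"
  by (simp add: sum_distrib_right right_diff_distrib sum_subtractf mult.assoc)

lemma ydec_rep0: "ydec (replicate m 0 @ w) = map_option (\<lambda>(x, i, b). (x + m, i, b)) (ydec w)"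
  by (induction m) (auto simp: option.map_comp comp_def case_prod_unfold option.map_ident)

lemma ydec_single: "l < d \<Longrightarrow> ydec [l + 3] = Some (0, l, 0)"
  by (simp add: isY_def)

end



context cons5 begin

lemma sw_eq: "sandwich (d+3) u r v = (\<lambda>z. \<Sum>i<d+3. \<Sum>j<d+3. r i j * ind (u @ [i, j] @ v) z)"
  unfolding sandwich_def ind_def by (rule ext) (intro sum.cong refl, simp)

lemma sw_mo: "x < d + 3 \<Longrightarrow> y < d + 3 \<Longrightarrow> sandwich (d+3) u (moR x y) v = ind (u @ [x, y] @ v)"
  unfolding sw_eq by (rule ext) (rule sum_mo)

lemma sw_mv: "i0 < d \<Longrightarrow> sandwich (d+3) u (mvR i0) v = ind (u @ [i0 + 3, 0] @ v) - (\<Sum>l<d. fscale (Cm i0 l) (ind (u @ [0, l + 3] @ v)))"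
  unfolding sw_eq by (rule ext) (simp add: sum_mv sum_app fscale_def)

lemma sw_st: "sandwich (d+3) u stR v = (\<Sum>l<d. fscale (a l) (ind (u @ [1, l + 3] @ v)))"
  unfolding sw_eq by (rule ext) (simp add: sum_st sum_app fscale_def)

lemma inGen: "r \<in> set rels \<Longrightarrow> set u \<subseteq> {0..<d+3} \<Longrightarrow> set v \<subseteq> {0..<d+3} \<Longrightarrow> length u + length v + 2 = N
   \<Longrightarrow> sandwich (d+3) u r v \<in> VS.span (Gen N)"
  unfolding Gen_def by (rule VS.span_base) (auto simp: words_iff)

lemma swap_alg: "(\<Sum>l<d. (\<Sum>k<d. c k * m k l) * (B l :: 'k)) = (\<Sum>k<d. c k * (\<Sum>l<d. m k l * B l))"
proof -
  have "(\<Sum>l<d. (\<Sum>k<d. c k * m k l) * B l) = (\<Sum>l<d. \<Sum>k<d. c k * m k l * B l)"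
    by (simp add: sum_distrib_right)
  also have "\<dots> = (\<Sum>k<d. \<Sum>l<d. c k * m k l * B l)" by (rule sum.swap)
  also have "\<dots> = (\<Sum>k<d. c k * (\<Sum>l<d. m k l * B l))" by (simp add: sum_distrib_left mult.assoc)
  finally show ?thesis .
qed

lemma fsum_delta: "i0 < d \<Longrightarrow> (\<Sum>l<d. fscale (if i0 = l then 1 else 0) (X l)) = (X i0 :: nat list \<Rightarrow> 'k)"
proof (rule ext)
  fix z assume i0: "i0 < d"
  have "(\<Sum>l<d. fscale (if i0 = l then 1 else 0) (X l)) z = (\<Sum>l<d. if l = i0 then X i0 z else 0)"
    unfolding sum_app fscale_def by (rule sum.cong) auto
  also have "\<dots> = X i0 z" using i0 by simp
  finally show "(\<Sum>l<d. fscale (if i0 = l then 1 else 0) (X l)) z = X i0 z" .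
qed

lemma red1:
  "i0 < d \<Longrightarrow> set u \<subseteq> {0..<d+3} \<Longrightarrow> set v \<subseteq> {0..<d+3} \<Longrightarrow> length u + b + 1 + length v = N \<Longrightarrow>
   ind (u @ (i0 + 3) # replicate b 0 @ v) - (\<Sum>l<d. fscale (mp b i0 l) (ind (u @ replicate b 0 @ (l + 3) # v))) \<in> VS.span (Gen N)"
proof (induction b arbitrary: u i0)
  case 0
  have "(\<Sum>l<d. fscale (mp 0 i0 l) (ind (u @ (l + 3) # v))) = ind (u @ (i0 + 3) # v)"
    using fsum_delta[OF 0(1), of "\<lambda>l. ind (u @ (l + 3) # v)"] by simp
  then show ?case using VS.span_zero[of "Gen N"] by (simp add: zero_fun_def)
next
  case (Suc b)
  let ?W = "ind (u @ (i0 + 3) # replicate (Suc b) 0 @ v) :: nat list \<Rightarrow> 'k"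
  let ?A = "\<lambda>k. ind (u @ [0, k + 3] @ (replicate b 0 @ v)) :: nat list \<Rightarrow> 'k"
  let ?B = "\<lambda>l. ind ((u @ [0]) @ replicate b 0 @ (l + 3) # v) :: nat list \<Rightarrow> 'k"
  define D1 where "D1 = sandwich (d+3) u (mvR i0) (replicate b 0 @ v)"
  have D1S: "D1 \<in> VS.span (Gen N)" unfolding D1_def
    by (rule inGen) (use Suc.prems mv_in in auto)
  have D1e: "D1 = ind (u @ [i0 + 3, 0] @ (replicate b 0 @ v)) - (\<Sum>k<d. fscale (Cm i0 k) (?A k))"
    unfolding D1_def by (rule sw_mv[OF Suc.prems(1)])
  have D2S: "ind ((u @ [0]) @ (k + 3) # replicate b 0 @ v) - (\<Sum>l<d. fscale (mp b k l) (?B l)) \<in> VS.span (Gen N)"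
    if "k < d" for k
    by (rule Suc.IH) (use Suc.prems that in auto)
  have A_eq: "ind ((u @ [0]) @ (k + 3) # replicate b 0 @ v) = ?A k" for k by simp
  have sS: "(\<Sum>k<d. fscale (Cm i0 k) (?A k - (\<Sum>l<d. fscale (mp b k l) (?B l)))) \<in> VS.span (Gen N)"
    using D2S A_eq by (intro VS.span_sum VS.span_scale) auto
  have key: "?W - (\<Sum>l<d. fscale (mp (Suc b) i0 l) (ind (u @ replicate (Suc b) 0 @ (l + 3) # v)))
      = D1 + (\<Sum>k<d. fscale (Cm i0 k) (?A k - (\<Sum>l<d. fscale (mp b k l) (?B l))))"
  proof (rule ext)
    fix z
    have "(?W - (\<Sum>l<d. fscale (mp (Suc b) i0 l) (ind (u @ replicate (Suc b) 0 @ (l + 3) # v)))) z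
       = ?W z - (\<Sum>l<d. (\<Sum>k<d. Cm i0 k * mp b k l) * ?B l z)"
      by (simp add: sum_app fscale_def)
    also have "\<dots> = ?W z - (\<Sum>k<d. Cm i0 k * (\<Sum>l<d. mp b k l * ?B l z))"
      by (simp only: swap_alg)
    also have "\<dots> = (D1 + (\<Sum>k<d. fscale (Cm i0 k) (?A k - (\<Sum>l<d. fscale (mp b k l) (?B l))))) z"
      unfolding D1e by (simp add: sum_app fscale_def right_diff_distrib sum_subtractf)
    finally show "(?W - (\<Sum>l<d. fscale (mp (Suc b) i0 l) (ind (u @ replicate (Suc b) 0 @ (l + 3) # v)))) z
       = (D1 + (\<Sum>k<d. fscale (Cm i0 k) (?A k - (\<Sum>l<d. fscale (mp b k l) (?B l))))) z" .
  qed
  show ?case unfolding key by (rule VS.span_add[OF D1S sS])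
qed

end



context cons5 begin

lemma twoY:
  assumes "k < d" "l < d" "set u \<subseteq> {0..<d+3}" "set v \<subseteq> {0..<d+3}" "length u + c + 2 + length v = N"
  shows "ind (u @ (k + 3) # replicate c 0 @ (l + 3) # v) \<in> VS.span (Gen N)"
proof -
  let ?S = "VS.span (Gen N)"
  have D: "ind (u @ (k + 3) # replicate c 0 @ ((l + 3) # v)) - (\<Sum>m<d. fscale (mp c k m) (ind (u @ replicate c 0 @ (m + 3) # ((l + 3) # v)))) \<in> ?S"
    by (rule red1) (use assms in auto)
  have E: "ind (u @ replicate c 0 @ (m + 3) # (l + 3) # v) \<in> ?S" if m: "m < d" for m
  proof -
    have "ind (u @ replicate c 0 @ (m + 3) # (l + 3) # v) = (sandwich (d+3) (u @ replicate c 0) (moR (m + 3) (l + 3)) v :: nat list \<Rightarrow> 'k)"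
      using sw_mo[of "m + 3" "l + 3" "u @ replicate c 0" v] m assms(2) by simp
    also have "\<dots> \<in> ?S"
      by (rule inGen) (use assms m in \<open>auto intro!: mo_in simp: nk_def isY_def\<close>)
    finally show ?thesis .
  qed
  have "(\<Sum>m<d. fscale (mp c k m) (ind (u @ replicate c 0 @ (m + 3) # ((l + 3) # v)))) \<in> ?S"
    using E by (intro VS.span_sum VS.span_scale) auto
  from VS.span_add[OF D this] show ?thesis by simp
qed

lemma startred:
  assumes "set suf \<subseteq> {0..<d+3}" "c + length suf + 2 = N"
  shows "(\<Sum>m<d. fscale (a (c + m)) (ind (1 # replicate c 0 @ (m + 3) # suf))) \<in> VS.span (Gen N)"
proof -
  let ?S = "VS.span (Gen N)"
  let ?X = "\<lambda>l. ind ([1, l + 3] @ replicate c 0 @ suf) :: nat list \<Rightarrow> 'k"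
  let ?Y = "\<lambda>m. ind ([1] @ replicate c 0 @ (m + 3) # suf) :: nat list \<Rightarrow> 'k"
  have S0: "sandwich (d+3) [] stR (replicate c 0 @ suf) \<in> ?S"
    by (rule inGen) (use assms st_in in auto)
  have S0e: "sandwich (d+3) [] stR (replicate c 0 @ suf) = (\<Sum>l<d. fscale (a l) (?X l))"
    by (simp add: sw_st)
  have D: "?X l - (\<Sum>m<d. fscale (mp c l m) (?Y m)) \<in> ?S" if "l < d" for l
    using red1[of l "[1]" suf c N] that assms by simp
  have DS: "(\<Sum>l<d. fscale (a l) (?X l - (\<Sum>m<d. fscale (mp c l m) (?Y m)))) \<in> ?S"
    using D by (intro VS.span_sum VS.span_scale) auto
  have key: "(\<Sum>m<d. fscale (a (c + m)) (ind (1 # replicate c 0 @ (m + 3) # suf)))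
     = sandwich (d+3) [] stR (replicate c 0 @ suf) - (\<Sum>l<d. fscale (a l) (?X l - (\<Sum>m<d. fscale (mp c l m) (?Y m))))"
  proof (rule ext)
    fix z
    have "(\<Sum>m<d. fscale (a (c + m)) (ind (1 # replicate c 0 @ (m + 3) # suf))) z = (\<Sum>m<d. (\<Sum>l<d. a l * mp c l m) * ?Y m z)"
      by (simp add: sum_app fscale_def mp_seq0 add.commute)
    also have "\<dots> = (\<Sum>l<d. a l * (\<Sum>m<d. mp c l m * ?Y m z))" by (rule swap_alg)
    also have "\<dots> = (sandwich (d+3) [] stR (replicate c 0 @ suf) - (\<Sum>l<d. fscale (a l) (?X l - (\<Sum>m<d. fscale (mp c l m) (?Y m))))) z"
      unfolding S0e by (simp add: sum_app fscale_def right_diff_distrib sum_subtractf)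
    finally show "(\<Sum>m<d. fscale (a (c + m)) (ind (1 # replicate c 0 @ (m + 3) # suf))) z =
      (sandwich (d+3) [] stR (replicate c 0 @ suf) - (\<Sum>l<d. fscale (a l) (?X l - (\<Sum>m<d. fscale (mp c l m) (?Y m))))) z" .
  qed
  show ?thesis unfolding key by (rule VS.span_diff[OF S0 DS])
qed

end



context cons5 begin

lemma zeros_rep: "\<forall>z\<in>set s. z = (0::nat) \<Longrightarrow> s = replicate (length s) 0"
  by (simp add: replicate_length_same)

lemma segdec:
  assumes L: "\<forall>z\<in>set s. z \<in> {0, 1, 2::nat}"
    and c1: "\<forall>s1 s2. s = s1 @ 1 # s2 \<longrightarrow> s1 = []"
    and c2: "\<forall>s1 s2. s = s1 @ 2 # s2 \<longrightarrow> s2 = []"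
  shows "\<exists>pre m suf. s = pre @ replicate m 0 @ suf \<and> (pre = [] \<or> pre = [1]) \<and> (suf = [] \<or> suf = [2])"
proof -
  obtain pre s' where ps: "s = pre @ s'" "pre = [] \<or> pre = [1]" "1 \<notin> set s'"
  proof (cases "s \<noteq> [] \<and> hd s = 1")
    case True
    then obtain t where t: "s = 1 # t" by (cases s) auto
    have "1 \<notin> set t"
    proof
      assume "1 \<in> set t"
      then obtain t1 t2 where "t = t1 @ 1 # t2" by (meson split_list)
      then have "s = (1 # t1) @ 1 # t2" using t by simp
      then show False using c1 by blast
    qed
    then show ?thesis using that[of "[1]" t] t by simp
  next
    case False
    have "1 \<notin> set s"
    proof
      assume "1 \<in> set s"
      then obtain t1 t2 where e: "s = t1 @ 1 # t2" by (meson split_list)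
      then have "t1 = []" using c1 by blast
      then show False using e False by simp
    qed
    then show ?thesis using that[of "[]" s] by simp
  qed
  obtain s'' suf where ss: "s' = s'' @ suf" "suf = [] \<or> suf = [2]" "2 \<notin> set s''"
  proof (cases "s' \<noteq> [] \<and> last s' = 2")
    case True
    then have e: "s' = butlast s' @ [2]" by (metis append_butlast_last_id)
    have "2 \<notin> set (butlast s')"
    proof
      assume "2 \<in> set (butlast s')"
      then obtain t1 t2 where "butlast s' = t1 @ 2 # t2" by (meson split_list)
      then have "s = (pre @ t1) @ 2 # (t2 @ [2])" using e ps(1) by (metis append.assoc append_Cons)
      then show False using c2 by blast
    qed
    then show ?thesis using that[of "butlast s'" "[2]"] e by simp
  next
    case False
    have "2 \<notin> set s'"
    proof
      assume "2 \<in> set s'"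
      then obtain t1 t2 where e: "s' = t1 @ 2 # t2" by (meson split_list)
      then have "s = (pre @ t1) @ 2 # t2" using ps(1) by simp
      then have "t2 = []" using c2 by blast
      then show False using e False by simp
    qed
    then show ?thesis using that[of s' "[]"] by simp
  qed
  have "\<forall>z\<in>set s''. z = 0" using L ps ss by auto
  then have "s'' = replicate (length s'') 0" by (rule zeros_rep)
  then show ?thesis using ps ss by (metis append.assoc)
qed

definition okw :: "nat list \<Rightarrow> bool" where
  "okw w = (\<forall>u x y v. w = u @ [x, y] @ v \<longrightarrow> nk x y)"

lemma span_all:
  assumes N3: "3 \<le> N" and w: "w \<in> words (d+3) N"
    and sub: "VS.subspace T" and ST: "VS.span (Gen N) \<subseteq> T"
    and endc: "\<And>pre m suf l. pre = [] \<or> pre = [1] \<Longrightarrow> suf = [] \<or> suf = [2] \<Longrightarrow> l < d \<Longrightarrow>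
        length pre + m + 1 + length suf = N \<Longrightarrow> ind (pre @ replicate m 0 @ (l + 3) # suf) \<in> T"
    and r0: "\<And>pre m suf. pre = [] \<or> pre = [1] \<Longrightarrow> suf = [] \<or> suf = [2] \<Longrightarrow>
        length pre + m + length suf = N \<Longrightarrow> ind (pre @ replicate m 0 @ suf) \<in> T"
  shows "ind w \<in> T"
proof -
  have wl: "length w = N" "set w \<subseteq> {0..<d+3}" using w by (simp_all add: words_iff)
  have inS: "f \<in> T" if "f \<in> VS.span (Gen N)" for f using that ST by blast
  show ?thesis
  proof (cases "okw w")
    case False
    then obtain u x y v where e: "w = u @ [x, y] @ v" and nn: "\<not> nk x y" unfolding okw_def by blast
    have xy: "x < d + 3" "y < d + 3" using wl(2) e by auto
    have "ind w = (sandwich (d+3) u (moR x y) v :: nat list \<Rightarrow> 'k)" using sw_mo[OF xy] e by simp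
    also have "\<dots> \<in> VS.span (Gen N)"
      by (rule inGen) (use wl e xy nn mo_in in auto)
    finally show ?thesis by (rule inS)
  next
    case True
    have p1: "\<forall>s1 s2. w = s1 @ 1 # s2 \<longrightarrow> s1 = []"
    proof (intro allI impI)
      fix s1 s2 assume e: "w = s1 @ 1 # s2"
      show "s1 = []"
      proof (rule ccontr)
        assume "s1 \<noteq> []"
        then obtain s1' c where "s1 = s1' @ [c]" by (metis rev_exhaust)
        then have "w = s1' @ [c, 1] @ s2" using e by simp
        then show False using True unfolding okw_def by (fastforce simp: nk_def isY_def)
      qed
    qed
    have p2: "\<forall>s1 s2. w = s1 @ 2 # s2 \<longrightarrow> s2 = []"
    proof (intro allI impI)
      fix s1 s2 assume e: "w = s1 @ 2 # s2"
      show "s2 = []"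
      proof (rule ccontr)
        assume "s2 \<noteq> []"
        then obtain c s2' where "s2 = c # s2'" by (cases s2) auto
        then have "w = s1 @ [2, c] @ s2'" using e by simp
        then show False using True unfolding okw_def by (fastforce simp: nk_def isY_def)
      qed
    qed
    have let3: "z \<in> {0, 1, 2} \<or> isY z" if "z \<in> set w" for z using that wl(2) by (auto simp: isY_def)
    show ?thesis
    proof (cases "\<exists>z\<in>set w. isY z")
      case False
      then have "\<forall>z\<in>set w. z \<in> {0, 1, 2}" using let3 by blast
      then obtain pre m suf where e: "w = pre @ replicate m 0 @ suf" "pre = [] \<or> pre = [1]" "suf = [] \<or> suf = [2]"
        using segdec p1 p2 by blast
      have "length pre + m + length suf = N" using e(1) wl(1) by simp
      then show ?thesis using r0[OF e(2,3)] e(1) by simp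
    next
      case True
      then obtain u c v where e: "w = u @ c # v" and cY: "isY c" and vY: "\<forall>z\<in>set v. \<not> isY z"
        using split_list_last_prop[of w isY] by blast
      have v1: "1 \<notin> set v"
      proof
        assume "1 \<in> set v"
        then obtain t1 t2 where "v = t1 @ 1 # t2" by (meson split_list)
        then have "w = (u @ c # t1) @ 1 # t2" using e by simp
        then show False using p1 by blast
      qed
      have vL: "\<forall>z\<in>set v. z \<in> {0, 1, 2}" using vY let3 e by auto
      have vc2: "\<forall>s1 s2. v = s1 @ 2 # s2 \<longrightarrow> s2 = []"
      proof (intro allI impI)
        fix s1 s2 assume "v = s1 @ 2 # s2"
        then have "w = (u @ c # s1) @ 2 # s2" using e by simp
        then show "s2 = []" using p2 by blast
      qed
      have vc1: "\<forall>s1 s2. v = s1 @ 1 # s2 \<longrightarrow> s1 = []" using v1 by auto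
      obtain prev b suf where ve: "v = prev @ replicate b 0 @ suf" "prev = [] \<or> prev = [1]" "suf = [] \<or> suf = [2]"
        using segdec[OF vL vc1 vc2] by blast
      have prev: "prev = []" using ve v1 by auto
      obtain i where ci: "c = i + 3" "i < d" using cY by (metis add.commute isY_def le_Suc_ex add_less_cancel_left)
      show ?thesis
      proof (cases "\<exists>z\<in>set u. isY z")
        case True
        then obtain u1 c' z where e2: "u = u1 @ c' # z" and c'Y: "isY c'" and zY: "\<forall>x\<in>set z. \<not> isY x"
          using split_list_last_prop[of u isY] by blast
        have z0: "\<forall>x\<in>set z. x = 0"
        proof
          fix x assume xz: "x \<in> set z"
          then obtain z1 z2 where ze: "z = z1 @ x # z2" by (meson split_list)
          have "x \<noteq> 1"
          proof
            assume "x = 1"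
            then have "w = (u1 @ c' # z1) @ 1 # (z2 @ c # v)" using e e2 ze by simp
            then show False using p1 by blast
          qed
          moreover have "x \<noteq> 2"
          proof
            assume "x = 2"
            then have "w = (u1 @ c' # z1) @ 2 # (z2 @ c # v)" using e e2 ze by simp
            then show False using p2 by blast
          qed
          moreover have "x \<in> {0, 1, 2} \<or> isY x" using let3 e e2 xz by auto
          ultimately show "x = 0" using zY xz by auto
        qed
        obtain k where ck: "c' = k + 3" "k < d" using c'Y by (metis add.commute isY_def le_Suc_ex add_less_cancel_left)
        have we: "w = u1 @ (k + 3) # replicate (length z) 0 @ (i + 3) # v"
          using e e2 zeros_rep[OF z0] ck ci by simp
        have "ind w \<in> VS.span (Gen N)"
          unfolding we by (rule twoY) (use ck ci wl we in auto)
        then show ?thesis by (rule inS)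
      next
        case False
        have uL: "\<forall>z\<in>set u. z \<in> {0, 1, 2}" using False let3 e by auto
        have u2: "2 \<notin> set u"
        proof
          assume "2 \<in> set u"
          then obtain t1 t2 where "u = t1 @ 2 # t2" by (meson split_list)
          then have "w = t1 @ 2 # (t2 @ c # v)" using e by simp
          then show False using p2 by blast
        qed
        have uc1: "\<forall>s1 s2. u = s1 @ 1 # s2 \<longrightarrow> s1 = []"
        proof (intro allI impI)
          fix s1 s2 assume "u = s1 @ 1 # s2"
          then have "w = s1 @ 1 # (s2 @ c # v)" using e by simp
          then show "s1 = []" using p1 by blast
        qed
        have uc2: "\<forall>s1 s2. u = s1 @ 2 # s2 \<longrightarrow> s2 = []" using u2 by auto
        obtain pre x sufu where ue: "u = pre @ replicate x 0 @ sufu" "pre = [] \<or> pre = [1]" "sufu = [] \<or> sufu = [2]"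
          using segdec[OF uL uc1 uc2] by blast
        have sufu: "sufu = []" using ue u2 by auto
        have we: "w = (pre @ replicate x 0) @ (i + 3) # replicate b 0 @ suf"
          using e ue sufu ve prev ci by simp
        have lenw: "length (pre @ replicate x 0) + b + 1 + length suf = N" using we wl by simp
        have D: "ind w - (\<Sum>l<d. fscale (mp b i l) (ind ((pre @ replicate x 0) @ replicate b 0 @ (l + 3) # suf))) \<in> VS.span (Gen N)"
          unfolding we by (rule red1) (use ci lenw wl we ue ve in auto)
        have E: "ind ((pre @ replicate x 0) @ replicate b 0 @ (l + 3) # suf) \<in> T" if "l < d" for l
        proof -
          have "ind ((pre @ replicate x 0) @ replicate b 0 @ (l + 3) # suf) = (ind (pre @ replicate (x + b) 0 @ (l + 3) # suf) :: nat list \<Rightarrow> 'k)"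
            by (simp add: replicate_add)
          also have "\<dots> \<in> T" by (rule endc) (use ue(2) ve(3) that lenw in auto)
          finally show ?thesis .
        qed
        have "(\<Sum>l<d. fscale (mp b i l) (ind ((pre @ replicate x 0) @ replicate b 0 @ (l + 3) # suf))) \<in> T"
          using E sub by (intro VS.subspace_sum VS.subspace_scale) auto
        from VS.subspace_add[OF sub inS[OF D] this] show ?thesis by simp
      qed
    qed
  qed
qed

end



context cons5 begin

definition Rl :: "nat \<Rightarrow> nat \<Rightarrow> nat list list" where
  "Rl n l0 = [replicate (Suc (Suc (Suc n))) 0, 1 # replicate (Suc (Suc n)) 0,
      replicate (Suc (Suc n)) 0 @ [2], 1 # replicate (Suc n) 0 @ [2]]
    @ map (\<lambda>l. replicate (Suc (Suc n)) 0 @ [l + 3]) [0..<d]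
    @ map (\<lambda>k. 1 # replicate (Suc n) 0 @ [k + 3]) (filter (\<lambda>k. k \<noteq> l0) [0..<d])
    @ [replicate (Suc n) 0 @ [3, 2]]
    @ (if a n = 0 then [1 # replicate n 0 @ [3, 2]] else [])"

lemma memR: "\<mu> \<in> set (Rl n l0) \<longleftrightarrow>
   \<mu> = replicate (Suc (Suc (Suc n))) 0 \<or> \<mu> = 1 # replicate (Suc (Suc n)) 0 \<or>
   \<mu> = replicate (Suc (Suc n)) 0 @ [2] \<or> \<mu> = 1 # replicate (Suc n) 0 @ [2] \<or>
   (\<exists>l<d. \<mu> = replicate (Suc (Suc n)) 0 @ [l + 3]) \<or>
   (\<exists>k<d. k \<noteq> l0 \<and> \<mu> = 1 # replicate (Suc n) 0 @ [k + 3]) \<or>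
   \<mu> = replicate (Suc n) 0 @ [3, 2] \<or> (a n = 0 \<and> \<mu> = 1 # replicate n 0 @ [3, 2])"
  unfolding Rl_def using d1 by auto

definition feat :: "nat list \<Rightarrow> nat \<times> nat \<times> bool" where
  "feat w = (hd w, last w, \<exists>z\<in>set w. isY z)"

lemma distinct_Rl: "distinct (Rl n l0)"
proof -
  have "distinct (map feat (Rl n l0))"
    unfolding Rl_def feat_def using d1 by (auto simp: isY_def distinct_map inj_on_def)
  then show ?thesis by (simp add: distinct_map)
qed

lemma length_Rl: "l0 < d \<Longrightarrow> length (Rl n l0) = (if a n = 0 then 2 * d + 5 else 2 * d + 4)"
proof -
  assume l0: "l0 < d"
  let ?xs = "[0..<d]"
  have "length (filter (\<lambda>k. k \<noteq> l0) ?xs) + length (filter (\<lambda>k. \<not> k \<noteq> l0) ?xs) = d"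
    using sum_length_filter_compl[of "\<lambda>k. k \<noteq> l0" ?xs] by simp
  moreover have "length (filter (\<lambda>k. \<not> k \<noteq> l0) ?xs) = 1"
  proof -
    have "set (filter (\<lambda>k. \<not> k \<noteq> l0) ?xs) = {l0}" using l0 by auto
    moreover have "distinct (filter (\<lambda>k. \<not> k \<noteq> l0) ?xs)" by simp
    ultimately show ?thesis using distinct_card by fastforce
  qed
  ultimately have "length (filter (\<lambda>k. k \<noteq> l0) ?xs) = d - 1" by simp
  then show ?thesis unfolding Rl_def using d1 by simp
qed

lemma ydec_rep00: "ydec (replicate m 0) = None"
  using ydec_rep0[of m "[]"] by simp

end



context cons5 begin

lemma hilb_n: "hilb (d+3) rels (n+3) = (if a n = 0 then 2 * d + 5 else 2 * d + 4)"
proof -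
  define N where "N = Suc (Suc (Suc n))"
  obtain l0 where l0: "l0 < d" "a (Suc n + l0) \<noteq> 0" using row_nz[of "Suc n"] by blast
  define R where "R = set (Rl n l0)"
  define W where "W = words (d+3) N"
  let ?S = "VS.span (Gen N)"
  define T where "T = VS.span (Gen N \<union> ind ` R)"
  have finW: "finite W" unfolding W_def by (rule finite_words)
  have RW: "R \<subseteq> W" unfolding R_def W_def N_def using d1 by (auto simp: memR words_iff)
  have cardR: "card R = (if a n = 0 then 2 * d + 5 else 2 * d + 4)"
    unfolding R_def using distinct_card[OF distinct_Rl] length_Rl[OF l0(1)] by simp
  have GE: "Gen N \<subseteq> VS.span (ind ` W)"
  proof
    fix g assume "g \<in> Gen N"
    then obtain u r v where g: "g = sandwich (d+3) u r v" and uv: "u \<in> words (d+3) (length u)" "v \<in> words (d+3) (length v)"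
      and len: "length u + length v + 2 = N" unfolding Gen_def by blast
    have "g = (\<Sum>i<d+3. \<Sum>j<d+3. fscale (r i j) (ind (u @ [i, j] @ v)))"
      unfolding g sw_eq by (rule ext) (simp add: sum_app fscale_def)
    also have "\<dots> \<in> VS.span (ind ` W)"
    proof (rule VS.span_sum, rule VS.span_sum, rule VS.span_scale, rule VS.span_base)
      fix i j assume "i \<in> {..<d+3}" "j \<in> {..<d+3}"
      then show "ind (u @ [i, j] @ v) \<in> ind ` W" using uv len by (auto simp: W_def words_iff)
    qed
    finally show "g \<in> VS.span (ind ` W)" .
  qed
  have subT: "VS.subspace T" unfolding T_def by (rule VS.subspace_span)
  have ST: "?S \<subseteq> T" unfolding T_def by (rule VS.span_mono) auto
  have RT: "ind \<mu> \<in> T" if "\<mu> \<in> R" for \<mu> unfolding T_def using that by (intro VS.span_base) auto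
  have SinT: "f \<in> T" if "f \<in> ?S" for f using that ST by blast
  have r0: "ind (pre @ replicate m 0 @ suf) \<in> T"
    if "pre = [] \<or> pre = [1]" "suf = [] \<or> suf = [2]" "length pre + m + length suf = N" for pre m suf
    by (rule RT) (use that in \<open>auto simp: R_def memR N_def\<close>)
  have endc: "ind (pre @ replicate m 0 @ (l + 3) # suf) \<in> T"
    if pre: "pre = [] \<or> pre = [1]" and suf: "suf = [] \<or> suf = [2]" and l: "l < d"
      and len: "length pre + m + 1 + length suf = N" for pre m suf l
  proof -
    consider "pre = []" "suf = []" | "pre = []" "suf = [2]" | "pre = [1]" "suf = []" | "pre = [1]" "suf = [2]"
      using pre suf by blast
    then show ?thesis
    proof cases
      case 1
      then show ?thesis using l len by (intro RT) (auto simp: R_def memR N_def)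
    next
      case 2
      show ?thesis
      proof (cases "l = 0")
        case True
        then show ?thesis using 2 len by (intro RT) (auto simp: R_def memR N_def)
      next
        case False
        have "ind (pre @ replicate m 0 @ (l + 3) # suf) = (sandwich (d+3) (replicate m 0) (moR (l + 3) 2) [] :: nat list \<Rightarrow> 'k)"
          using sw_mo[of "l + 3" 2 "replicate m 0" "[]"] 2 l by simp
        also have "\<dots> \<in> ?S" by (rule inGen) (use 2 l len False in \<open>auto intro!: mo_in simp: nk_def isY_def\<close>)
        finally show ?thesis by (rule SinT)
      qed
    next
      case 3
      then have m: "m = Suc n" using len by (simp add: N_def)
      show ?thesis
      proof (cases "l = l0")
        case False
        then show ?thesis using 3 l m by (intro RT) (auto simp: R_def memR)
      next
        case True
        let ?X = "\<lambda>k. ind (1 # replicate (Suc n) 0 @ [k + 3]) :: nat list \<Rightarrow> 'k"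
        have st: "(\<Sum>k<d. fscale (a (Suc n + k)) (?X k)) \<in> ?S"
          using startred[of "[]" "Suc n" N] by (simp add: N_def)
        have split: "(\<Sum>k<d. fscale (a (Suc n + k)) (?X k)) = fscale (a (Suc n + l0)) (?X l0) + (\<Sum>k\<in>{..<d} - {l0}. fscale (a (Suc n + k)) (?X k))"
          using l0(1) by (simp add: sum.remove)
        have rest: "(\<Sum>k\<in>{..<d} - {l0}. fscale (a (Suc n + k)) (?X k)) \<in> T"
          by (intro VS.subspace_sum[OF subT] VS.subspace_scale[OF subT] RT) (auto simp: R_def memR)
        have "fscale (a (Suc n + l0)) (?X l0) \<in> T"
          using VS.subspace_diff[OF subT SinT[OF st] rest] unfolding split by simp
        then have "fscale (1 / a (Suc n + l0)) (fscale (a (Suc n + l0)) (?X l0)) \<in> T"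
          by (rule VS.subspace_scale[OF subT])
        moreover have "fscale (1 / a (Suc n + l0)) (fscale (a (Suc n + l0)) (?X l0)) = ?X l0"
          using l0(2) by (simp add: fscale_def fun_eq_iff)
        ultimately show ?thesis using 3 m True by simp
      qed
    next
      case 4
      then have m: "m = n" using len by (simp add: N_def)
      show ?thesis
      proof (cases "l = 0")
        case False
        have "ind (pre @ replicate m 0 @ (l + 3) # suf) = (sandwich (d+3) (1 # replicate m 0) (moR (l + 3) 2) [] :: nat list \<Rightarrow> 'k)"
          using sw_mo[of "l + 3" 2 "1 # replicate m 0" "[]"] 4 l by simp
        also have "\<dots> \<in> ?S" by (rule inGen) (use 4 l len False in \<open>auto intro!: mo_in simp: nk_def isY_def\<close>)
        finally show ?thesis by (rule SinT)
      next
        case True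
        show ?thesis
        proof (cases "a n = 0")
          case True
          then show ?thesis using 4 m \<open>l = 0\<close> by (intro RT) (auto simp: R_def memR)
        next
          case False
          let ?Y = "\<lambda>k. ind (1 # replicate n 0 @ (k + 3) # [2]) :: nat list \<Rightarrow> 'k"
          have st: "(\<Sum>k<d. fscale (a (n + k)) (?Y k)) \<in> ?S"
            using startred[of "[2]" n N] by (simp add: N_def)
          have Yk: "?Y k \<in> ?S" if "k \<in> {..<d} - {0}" for k
          proof -
            have "?Y k = (sandwich (d+3) (1 # replicate n 0) (moR (k + 3) 2) [] :: nat list \<Rightarrow> 'k)"
              using sw_mo[of "k + 3" 2 "1 # replicate n 0" "[]"] that by simp
            also have "\<dots> \<in> ?S" by (rule inGen) (use that in \<open>auto intro!: mo_in simp: nk_def isY_def N_def\<close>)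
            finally show ?thesis .
          qed
          have z: "0 \<in> {..<d}" using d1 by simp
          have split: "(\<Sum>k<d. fscale (a (n + k)) (?Y k)) = fscale (a (n + 0)) (?Y 0) + (\<Sum>k\<in>{..<d} - {0}. fscale (a (n + k)) (?Y k))"
            by (rule sum.remove[OF finite_lessThan z])
          have rest: "(\<Sum>k\<in>{..<d} - {0}. fscale (a (n + k)) (?Y k)) \<in> ?S"
            using Yk by (intro VS.span_sum VS.span_scale) auto
          have "fscale (a (n + 0)) (?Y 0) \<in> ?S"
            using VS.span_diff[OF st rest] unfolding split by simp
          then have "fscale (a n) (?Y 0) \<in> ?S" by simp
          then have "fscale (1 / a n) (fscale (a n) (?Y 0)) \<in> ?S" by (rule VS.span_scale)
          moreover have "fscale (1 / a n) (fscale (a n) (?Y 0)) = ?Y 0"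
            using False by (simp add: fscale_def fun_eq_iff)
          ultimately show ?thesis using 4 m True by (intro SinT) simp
        qed
      qed
    qed
  qed
  have sp: "\<forall>w\<in>W. ind w \<in> VS.span (Gen N \<union> ind ` R)"
  proof
    fix w assume "w \<in> W"
    then show "ind w \<in> VS.span (Gen N \<union> ind ` R)"
    proof -
      have "ind w \<in> T" by (rule span_all[OF _ _ subT ST endc r0]) (use \<open>w \<in> W\<close> in \<open>simp_all add: W_def N_def\<close>)
      then show ?thesis unfolding T_def .
    qed
  qed
  have good: "\<forall>g\<in>Gen N. Fn \<phi> W g = 0" if "monoP \<phi>" "mvP \<phi>" "stP N \<phi>" for \<phi>
    unfolding W_def using fun_ok[OF that] by blast
  have fu: "\<forall>\<nu>\<in>R. \<exists>\<phi>. (\<forall>g\<in>Gen N. Fn \<phi> W g = 0) \<and> \<phi> \<nu> \<noteq> 0 \<and> (\<forall>\<mu>\<in>R. \<mu> \<noteq> \<nu> \<longrightarrow> \<phi> \<mu> = 0)"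
  proof
    fix \<nu> assume "\<nu> \<in> R"
    then have \<nu>: "\<nu> = replicate (Suc (Suc (Suc n))) 0 \<or> \<nu> = 1 # replicate (Suc (Suc n)) 0 \<or>
      \<nu> = replicate (Suc (Suc n)) 0 @ [2] \<or> \<nu> = 1 # replicate (Suc n) 0 @ [2] \<or>
      (\<exists>l<d. \<nu> = replicate (Suc (Suc n)) 0 @ [l + 3]) \<or>
      (\<exists>k<d. k \<noteq> l0 \<and> \<nu> = 1 # replicate (Suc n) 0 @ [k + 3]) \<or>
      \<nu> = replicate (Suc n) 0 @ [3, 2] \<or> (a n = 0 \<and> \<nu> = 1 # replicate n 0 @ [3, 2])"
      unfolding R_def memR .
    have Rm: "\<mu> \<in> R \<longleftrightarrow> \<mu> = replicate (Suc (Suc (Suc n))) 0 \<or> \<mu> = 1 # replicate (Suc (Suc n)) 0 \<or>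
      \<mu> = replicate (Suc (Suc n)) 0 @ [2] \<or> \<mu> = 1 # replicate (Suc n) 0 @ [2] \<or>
      (\<exists>l<d. \<mu> = replicate (Suc (Suc n)) 0 @ [l + 3]) \<or>
      (\<exists>k<d. k \<noteq> l0 \<and> \<mu> = 1 # replicate (Suc n) 0 @ [k + 3]) \<or>
      \<mu> = replicate (Suc n) 0 @ [3, 2] \<or> (a n = 0 \<and> \<mu> = 1 # replicate n 0 @ [3, 2])" for \<mu>
      unfolding R_def memR ..
    have R0case: "\<exists>\<phi>. (\<forall>g\<in>Gen N. Fn \<phi> W g = 0) \<and> \<phi> \<nu> \<noteq> 0 \<and> (\<forall>\<mu>\<in>R. \<mu> \<noteq> \<nu> \<longrightarrow> \<phi> \<mu> = 0)"
      if "\<forall>c\<in>set \<nu>. \<not> isY c" "set (butlast \<nu>) \<subseteq> {0, 1}" "set (tl \<nu>) \<subseteq> {0, 2}"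
    proof (intro exI conjI)
      show "\<forall>g\<in>Gen N. Fn (ind \<nu>) W g = 0" using ind_fun[OF that] good by blast
      show "(ind \<nu> :: nat list \<Rightarrow> 'k) \<nu> \<noteq> 0" by (simp add: ind_def)
      show "\<forall>\<mu>\<in>R. \<mu> \<noteq> \<nu> \<longrightarrow> (ind \<nu> :: nat list \<Rightarrow> 'k) \<mu> = 0" by (simp add: ind_def)
    qed
    show "\<exists>\<phi>. (\<forall>g\<in>Gen N. Fn \<phi> W g = 0) \<and> \<phi> \<nu> \<noteq> 0 \<and> (\<forall>\<mu>\<in>R. \<mu> \<noteq> \<nu> \<longrightarrow> \<phi> \<mu> = 0)"
    proof -
      consider "\<nu> = replicate (Suc (Suc (Suc n))) 0" | "\<nu> = 1 # replicate (Suc (Suc n)) 0" |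
        "\<nu> = replicate (Suc (Suc n)) 0 @ [2]" | "\<nu> = 1 # replicate (Suc n) 0 @ [2]" |
        l where "l < d" "\<nu> = replicate (Suc (Suc n)) 0 @ [l + 3]" |
        k where "k < d" "k \<noteq> l0" "\<nu> = 1 # replicate (Suc n) 0 @ [k + 3]" |
        "\<nu> = replicate (Suc n) 0 @ [3, 2]" | "a n = 0" "\<nu> = 1 # replicate n 0 @ [3, 2]"
        using \<nu> by blast
      then show ?thesis
      proof cases
        case 1 then show ?thesis by (intro R0case) (auto simp: isY_def dest: in_set_butlastD)
      next
        case 2 then show ?thesis by (intro R0case) (auto simp: isY_def dest: in_set_butlastD)
      next
        case 3 then show ?thesis by (intro R0case) (auto simp: isY_def butlast_append dest: in_set_butlastD)
      next
        case 4 then show ?thesis by (intro R0case) (auto simp: isY_def butlast_append dest: in_set_butlastD)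
      next
        case (5 l)
        let ?\<phi> = "Gv (\<lambda>b i. mp b i l)"
        show ?thesis
        proof (intro exI conjI)
          show "\<forall>g\<in>Gen N. Fn ?\<phi> W g = 0"
            by (rule good[OF Gv_mono Gv_mv no1_st[OF Gv_no1]]) simp
          show "?\<phi> \<nu> \<noteq> 0" using 5 by (simp add: Gv_def ydec_rep0 isY_def)
          show "\<forall>\<mu>\<in>R. \<mu> \<noteq> \<nu> \<longrightarrow> ?\<phi> \<mu> = 0"
            using 5 by (auto simp: Rm Gv_def ydec_rep0 ydec_rep00 isY_def split: if_splits)
        qed
      next
        case (6 k)
        define \<rho> where "\<rho> = (\<lambda>j. a (Suc n + j))"
        let ?h = "\<lambda>b i. mp b i k * \<rho> l0 - mp b i l0 * \<rho> k"
        let ?\<phi> = "pw (Gv ?h)"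
        have sum0: "(\<Sum>j<d. a j * ?h (N - 2) j) = 0"
        proof -
          have "(\<Sum>j<d. a j * ?h (N - 2) j) = (\<Sum>j<d. a j * mp (Suc n) j k) * \<rho> l0 - (\<Sum>j<d. a j * mp (Suc n) j l0) * \<rho> k"
            by (simp add: N_def right_diff_distrib sum_subtractf sum_distrib_right mult.assoc)
          also have "\<dots> = 0" using mp_seq0[of k "Suc n"] mp_seq0[of l0 "Suc n"] 6 l0 by (simp add: \<rho>_def)
          finally show ?thesis .
        qed
        show ?thesis
        proof (intro exI conjI)
          show "\<forall>g\<in>Gen N. Fn ?\<phi> W g = 0"
            by (rule good[OF pw_mono[OF Gv_mono Gv_hd] pw_mv[OF Gv_mv] Gv_st[of "?h" N, OF sum0]]) (simp_all add: N_def right_diff_distrib sum_subtractf sum_distrib_right mult.assoc)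
          show "?\<phi> \<nu> \<noteq> 0" using 6 l0 by (simp add: pw_def Gv_def ydec_rep0 isY_def \<rho>_def)
          show "\<forall>\<mu>\<in>R. \<mu> \<noteq> \<nu> \<longrightarrow> ?\<phi> \<mu> = 0"
            using 6 by (auto simp: Rm pw_def Gv_def ydec_rep0 ydec_rep00 isY_def split: if_splits)
        qed
      next
        case 7
        let ?\<phi> = "qw (Gv (\<lambda>b i. mp b i 0))"
        show ?thesis
        proof (intro exI conjI)
          show "\<forall>g\<in>Gen N. Fn ?\<phi> W g = 0"
            by (rule good[OF qw_mono qw_mv[OF Gv_mv] no1_st[OF qw_no1]]) simp_all
          show "?\<phi> \<nu> \<noteq> 0" using 7 d1 by (simp add: qw_def Gv_def ydec_rep0 isY_def butlast_append)
          show "\<forall>\<mu>\<in>R. \<mu> \<noteq> \<nu> \<longrightarrow> ?\<phi> \<mu> = 0"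
            using 7 by (auto simp: Rm qw_def Gv_def ydec_rep0 ydec_rep00 isY_def butlast_append split: if_splits)
        qed
      next
        case 8
        let ?\<phi> = "pw (qw (Gv (\<lambda>b i. mp b i 0)))"
        have sum0: "(\<Sum>j<d. a j * mp (N - 3) j 0) = 0"
          using mp_seq0[of 0 n] d1 8 by (simp add: N_def)
        show ?thesis
        proof (intro exI conjI)
          show "\<forall>g\<in>Gen N. Fn ?\<phi> W g = 0"
            by (rule good[OF pw_mono[OF qw_mono qw_hd] pw_mv[OF qw_mv[OF Gv_mv]] qGv_st[of "\<lambda>b i. mp b i 0" N, OF sum0]]) (simp_all add: N_def)
          show "?\<phi> \<nu> \<noteq> 0" using 8 d1 by (simp add: pw_def qw_def Gv_def ydec_rep0 isY_def butlast_append)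
          show "\<forall>\<mu>\<in>R. \<mu> \<noteq> \<nu> \<longrightarrow> ?\<phi> \<mu> = 0"
            using 8 by (auto simp: Rm pw_def qw_def Gv_def ydec_rep0 ydec_rep00 isY_def butlast_append split: if_splits)
        qed
      qed
    qed
  qed
  have "VS.dim (VS.span (Gen N)) + card R = card W"
    by (rule dim_lemma[OF finW RW GE sp fu])
  then show ?thesis
    unfolding hilb_def ideal_Gen using cardR by (simp add: W_def N_def numeral_3_eq_3)
qed

end


theorem corollary5p1:
  fixes a \<gamma> :: "nat \<Rightarrow> 'k::field" and d :: nat
  assumes "d \<ge> 1"
    and "\<forall>n\<ge>d. a n = (\<Sum>i=1..d. \<gamma> i * a (n - i))"
    and "\<gamma> d \<noteq> 0"
    and "\<exists>i<d. a i \<noteq> 0"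
  shows "\<exists>rels :: (nat \<Rightarrow> nat \<Rightarrow> 'k) list.
           length rels = d^2 + 4*d + 5 \<and>
           (\<forall>r\<in>set rels. \<exists>i<d+3. \<exists>j<d+3. r i j \<noteq> 0) \<and>
           (\<forall>n. hilb (d+3) rels (n+3) = (if a n = 0 then 2*d+5 else 2*d+4))"
proof -
  interpret cons5 a \<gamma> d using assms by unfold_locales
  show ?thesis
    by (intro exI[of _ rels] conjI length_rels rels_nz allI hilb_n)
qed

end
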